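(* Let $\mathbb H=\mathbb H(\mathfrak t,W_{\mathcal L},c\mathbf r,\natural)$ be the algebra described below. Then $S(\mathfrak t^* )^{W_{\mathcal L}}\otimes\mathbb C[\mathbf r]$ is a central subalgebra of $\mathbb H$. If $W_{\mathcal L}$ acts faithfully on $\mathfrak t$, then $S(\mathfrak t^* )^{W_{\mathcal L}}\otimes\mathbb C[\mathbf r]$ equals the centre of $\mathbb H$.
   Context: Let $G$ be a complex reductive algebraic group, possibly disconnected, with identity component $G^\circ$ and Lie algebra $\mathfrak g$. Let $P=LU$ be a parabolic subgroup of $G^\circ$ with Levi factor $L$, let $v\in\mathrm{Lie}(L)$ be nilpotent with adjoint orbit $\mathcal C_v^L$, and let $\mathcal L$ be an irreducible $L$-equivariant cuspidal local system on $\mathcal C_v^L$. Put $T=Z(L)^\circ$, $\mathfrak t=\mathrm{Lie}(T)$. Let $N_G(\mathcal L)$ be the stabilizer of $\mathcal L$ in $N_G(L)$, $N_G(P,\mathcal L)$ the stabilizer of $(P,L,\mathcal L)$; $W_{\mathcal L}=N_G(\mathcal L)/L$, $W^\circ_{\mathcal L}=N_{G^\circ}(L)/L$ (the Weyl group of the root system $R(G^\circ,T)$ of nonzero weights of $T$ on $\mathfrak g$), $\mathcal R_{\mathcal L}=N_G(P,\mathcal L)/L$, so $W_{\mathcal L}=W^\circ_{\mathcal L}\rtimes\mathcal R_{\mathcal L}$. Let $\alpha_i$ ($i\in I$) be the simple roots with respect to $P$ and $s_i$ their reflections; let $c_i\in\mathbb C$ with $c_i=c_j$ when $s_i,s_j$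 are $W_{\mathcal L}$-conjugate, and $\natural$ a 2-cocycle on $W_{\mathcal L}/W^\circ_{\mathcal L}$. $\mathbb H(\mathfrak t,W_{\mathcal L},c\mathbf r,\natural)$ is the unique associative algebra on $\mathbb C[W_{\mathcal L},\natural]\otimes S(\mathfrak t^* )\otimes\mathbb C[\mathbf r]$ ($\mathbf r$ an indeterminate, $N_w$ the standard basis of the twisted group algebra) in which $\mathbb C[W_{\mathcal L},\natural]$ and $S(\mathfrak t^* )\otimes\mathbb C[\mathbf r]$ are subalgebras, $\mathbf r$ is central, $N_{s_i}\xi-{}^{s_i}\xi N_{s_i}=c_i\mathbf r(\xi-{}^{s_i}\xi)/\alpha_i$ for $\xi\in S(\mathfrak t^* )$, and $N_w\xi N_w^{-1}={}^w\xi$ for $w\in\mathcal R_{\mathcal L}$. *)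

theory Defs
  imports Complex_Main "HOL-Algebra.Generated_Groups" "HOL-Algebra.Coset"
begin

text \<open>The torus Lie algebra t is modelled as complex^n, i.e. functions 'n => complex
  for a finite index type 'n.  Linear functionals on t are given by coefficient vectors,
  linear endomorphisms by matrices.\<close>

definition lin :: "('n::finite \<Rightarrow> complex) \<Rightarrow> ('n \<Rightarrow> complex) \<Rightarrow> complex" where
  "lin a x = (\<Sum>j\<in>UNIV. a j * x j)"

definition mv :: "('n::finite \<Rightarrow> 'n \<Rightarrow> complex) \<Rightarrow> ('n \<Rightarrow> complex) \<Rightarrow> ('n \<Rightarrow> complex)" where
  "mv M x = (\<lambda>i. \<Sum>j\<in>UNIV. M i j * x j)"

definition mmul :: "('n::finite \<Rightarrow> 'n \<Rightarrow> complex) \<Rightarrow> ('n \<Rightarrow> 'n \<Rightarrow> complex) \<Rightarrow> ('n \<Rightarrow> 'n \<Rightarrow> complex)" where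
  "mmul M N = (\<lambda>i k. \<Sum>j\<in>UNIV. M i j * N j k)"

definition idm :: "'n \<Rightarrow> 'n \<Rightarrow> complex" where
  "idm = (\<lambda>i j. if i = j then 1 else 0)"

text \<open>S(t^*): polynomial functions on t (C is infinite, so this is the symmetric algebra).\<close>
inductive_set tpoly :: "(('n::finite \<Rightarrow> complex) \<Rightarrow> complex) set" where
  tconst: "(\<lambda>x. c) \<in> tpoly"
| tcoord: "(\<lambda>x. x j) \<in> tpoly"
| tadd: "f \<in> tpoly \<Longrightarrow> g \<in> tpoly \<Longrightarrow> (\<lambda>x. f x + g x) \<in> tpoly"
| tmult: "f \<in> tpoly \<Longrightarrow> g \<in> tpoly \<Longrightarrow> (\<lambda>x. f x * g x) \<in> tpoly"

text \<open>S(t^*) \<otimes> C[r]: polynomial functions on t \<times> C, the last variable being r.\<close>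
inductive_set rpoly :: "(('n::finite \<Rightarrow> complex) \<Rightarrow> complex \<Rightarrow> complex) set" where
  rconst: "(\<lambda>x r. c) \<in> rpoly"
| rcoord: "(\<lambda>x r. x j) \<in> rpoly"
| rvar: "(\<lambda>x r. r) \<in> rpoly"
| radd: "f \<in> rpoly \<Longrightarrow> g \<in> rpoly \<Longrightarrow> (\<lambda>x r. f x r + g x r) \<in> rpoly"
| rmult: "f \<in> rpoly \<Longrightarrow> g \<in> rpoly \<Longrightarrow> (\<lambda>x r. f x r * g x r) \<in> rpoly"

text \<open>Action of w on functions: (w \<xi>)(x) = \<xi>(w^{-1} x); here M is the matrix of w^{-1}.\<close>
definition tact :: "('n::finite \<Rightarrow> 'n \<Rightarrow> complex) \<Rightarrow> (('n \<Rightarrow> complex) \<Rightarrow> complex) \<Rightarrow> (('n \<Rightarrow> complex) \<Rightarrow> complex)" where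
  "tact M f = (\<lambda>x. f (mv M x))"

definition ract :: "('n::finite \<Rightarrow> 'n \<Rightarrow> complex) \<Rightarrow> (('n \<Rightarrow> complex) \<Rightarrow> complex \<Rightarrow> complex) \<Rightarrow> (('n \<Rightarrow> complex) \<Rightarrow> complex \<Rightarrow> complex)" where
  "ract M f = (\<lambda>x r. f (mv M x) r)"

definition funct_act :: "('n::finite \<Rightarrow> 'n \<Rightarrow> complex) \<Rightarrow> ('n \<Rightarrow> complex) \<Rightarrow> ('n \<Rightarrow> complex)" where
  "funct_act M a = (\<lambda>j. \<Sum>i\<in>UNIV. a i * M i j)"

definition divdiff :: "('n::finite \<Rightarrow> complex) \<Rightarrow> (('n \<Rightarrow> complex) \<Rightarrow> complex) \<Rightarrow> (('n \<Rightarrow> complex) \<Rightarrow> complex) \<Rightarrow> (('n \<Rightarrow> complex) \<Rightarrow> complex)" where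
  "divdiff a f g = (THE h. h \<in> tpoly \<and> (\<forall>x. lin a x * h x = f x - g x))"

definition inv_rpoly :: "('w, 'b) monoid_scheme \<Rightarrow> ('w \<Rightarrow> 'n::finite \<Rightarrow> 'n \<Rightarrow> complex)
    \<Rightarrow> (('n \<Rightarrow> complex) \<Rightarrow> complex \<Rightarrow> complex) set" where
  "inv_rpoly W \<rho> = {f \<in> rpoly. \<forall>w\<in>carrier W. ract (\<rho> (inv\<^bsub>W\<^esub> w)) f = f}"

definition centre :: "'h::ring_1 set" where
  "centre = {z. \<forall>h. z * h = h * z}"

text \<open>H (a complex algebra, given as a ring 'h with complex scalars \<iota>(const c)) is the
 graded Hecke algebra H(t, W, c r, \<natural>): iota embeds S(t^*) \<otimes> C[r], N w is the standard
 basis of the twisted group algebra C[W,\<natural>], H = C[W,\<natural>] \<otimes> S(t^*) \<otimes> C[r] as vector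
 spaces (multiplication map), r central, and the cross relations hold.\<close>
definition is_graded_hecke ::
  "('w, 'b) monoid_scheme \<Rightarrow> ('w \<Rightarrow> 'n::finite \<Rightarrow> 'n \<Rightarrow> complex) \<Rightarrow> 'w set \<Rightarrow> 'i set
   \<Rightarrow> ('i \<Rightarrow> 'n \<Rightarrow> complex) \<Rightarrow> ('i \<Rightarrow> 'w) \<Rightarrow> ('i \<Rightarrow> complex) \<Rightarrow> ('w \<Rightarrow> 'w \<Rightarrow> complex)
   \<Rightarrow> ((('n \<Rightarrow> complex) \<Rightarrow> complex \<Rightarrow> complex) \<Rightarrow> 'h::ring_1) \<Rightarrow> ('w \<Rightarrow> 'h) \<Rightarrow> bool" where
  "is_graded_hecke W \<rho> R I \<alpha> s c cocyc \<iota> N \<longleftrightarrow>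
     \<comment> \<open>S(t^*) \<otimes> C[r] is a subalgebra\<close>
     (\<forall>f\<in>rpoly. \<forall>g\<in>rpoly. \<iota> (\<lambda>x r. f x r + g x r) = \<iota> f + \<iota> g) \<and>
     (\<forall>f\<in>rpoly. \<forall>g\<in>rpoly. \<iota> (\<lambda>x r. f x r * g x r) = \<iota> f * \<iota> g) \<and>
     \<iota> (\<lambda>x r. 1) = 1 \<and>
     \<comment> \<open>complex scalars are central (H is a C-algebra) and r is central\<close>
     (\<forall>a h. \<iota> (\<lambda>x r. a) * h = h * \<iota> (\<lambda>x r. a)) \<and>
     (\<forall>h. \<iota> (\<lambda>x r. r) * h = h * \<iota> (\<lambda>x r. r)) \<and>
     \<comment> \<open>C[W,\<natural>] is a subalgebra with standard basis N\<close>
     N \<one>\<^bsub>W\<^esub> = 1 \<and>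
     (\<forall>w\<in>carrier W. \<forall>v\<in>carrier W. N w * N v = \<iota> (\<lambda>x r. cocyc w v) * N (w \<otimes>\<^bsub>W\<^esub> v)) \<and>
     \<comment> \<open>H = C[W,\<natural>] \<otimes> S(t^*) \<otimes> C[r] as vector spaces\<close>
     (\<forall>h. \<exists>!F. (\<forall>w. w \<notin> carrier W \<longrightarrow> F w = (\<lambda>x r. 0)) \<and> (\<forall>w\<in>carrier W. F w \<in> rpoly) \<and>
              h = (\<Sum>w\<in>carrier W. N w * \<iota> (F w))) \<and>
     \<comment> \<open>N_{s_i} \<xi> - s_i(\<xi>) N_{s_i} = c_i r (\<xi> - s_i(\<xi>))/\<alpha>_i for \<xi> in S(t^*)\<close>
     (\<forall>i\<in>I. \<forall>f\<in>tpoly.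
        N (s i) * \<iota> (\<lambda>x r. f x) - \<iota> (\<lambda>x r. tact (\<rho> (inv\<^bsub>W\<^esub> (s i))) f x) * N (s i)
        = \<iota> (\<lambda>x r. c i * r * divdiff (\<alpha> i) f (tact (\<rho> (inv\<^bsub>W\<^esub> (s i))) f) x)) \<and>
     \<comment> \<open>N_w \<xi> N_w^{-1} = w(\<xi>) for w in R, written as N_w \<xi> = w(\<xi>) N_w\<close>
     (\<forall>w\<in>R. \<forall>f\<in>tpoly.
        N w * \<iota> (\<lambda>x r. f x) = \<iota> (\<lambda>x r. tact (\<rho> (inv\<^bsub>W\<^esub> w)) f x) * N w)"

end

theory Submission imports Defs "HOL-Computational_Algebra.Polynomial" "HOL-Algebra.Multiplicative_Group" "HOL-Library.Function_Algebras" begin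

definition line :: "('n::finite \<Rightarrow> complex) \<Rightarrow> ('n \<Rightarrow> complex) \<Rightarrow> complex \<Rightarrow> ('n \<Rightarrow> complex)" where
  "line x v t = (\<lambda>j. x j + t * v j)"

lemma rpoly_line:
  assumes "f \<in> rpoly" shows "\<exists>p. \<forall>t. f (line x v t) r = poly p t"
  using assms
proof induction
  case (rconst c) show ?case by (rule exI[of _ "[:c:]"]) simp
next
  case (rcoord j) show ?case by (rule exI[of _ "[:x j, v j:]"]) (simp add: line_def)
next
  case rvar show ?case by (rule exI[of _ "[:r:]"]) simp
next
  case (radd f g)
  then obtain p q where "\<forall>t. f (line x v t) r = poly p t" "\<forall>t. g (line x v t) r = poly q t" by blast
  then show ?case by (intro exI[of _ "p + q"]) simp
next
  case (rmult f g)
  then obtain p q where "\<forall>t. f (line x v t) r = poly p t" "\<forall>t. g (line x v t) r = poly q t" by blast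
  then show ?case by (intro exI[of _ "p * q"]) simp
qed

lemma tpoly_rpoly: "f \<in> tpoly \<Longrightarrow> (\<lambda>x r. f x) \<in> rpoly"
  by (induction rule: tpoly.induct) (auto intro: rpoly.intros)

lemma rpoly_sum:
  assumes "\<forall>k\<in>K. g k \<in> rpoly" shows "(\<lambda>x r. \<Sum>k\<in>K. g k x r) \<in> rpoly"
proof (cases "finite K")
  case True then show ?thesis using assms
  proof (induction K)
    case empty then show ?case using rpoly.rconst[of 0] by simp
  next
    case (insert k K)
    then have "(\<lambda>x r. g k x r + (\<Sum>k\<in>K. g k x r)) \<in> rpoly"
      using rpoly.radd[of "g k" "\<lambda>x r. \<Sum>k\<in>K. g k x r"] by auto
    then show ?case using insert by simp
  qed
next
  case False then show ?thesis using rpoly.rconst[of 0] by simp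
qed

lemma rpoly_cmul: "f \<in> rpoly \<Longrightarrow> (\<lambda>x r. a * f x r) \<in> rpoly"
  using rpoly.rmult[OF rpoly.rconst[of a]] by blast

lemma rpoly_mulr: "f \<in> rpoly \<Longrightarrow> (\<lambda>x r. r * f x r) \<in> rpoly"
  using rpoly.rmult[OF rpoly.rvar] by blast

lemma rpoly_minus: "f \<in> rpoly \<Longrightarrow> g \<in> rpoly \<Longrightarrow> (\<lambda>x r. f x r - g x r) \<in> rpoly"
proof -
  assume "f \<in> rpoly" "g \<in> rpoly"
  then have "(\<lambda>x r. f x r + (-1) * g x r) \<in> rpoly" by (intro rpoly.radd rpoly_cmul)
  then show ?thesis by simp
qed

lemma rpoly_lin: "(\<lambda>x r. lin a x) \<in> rpoly"
proof -
  have "(\<lambda>x r. \<Sum>j\<in>UNIV. a j * x j) \<in> rpoly"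
    by (rule rpoly_sum) (auto intro: rpoly_cmul rpoly.rcoord)
  then show ?thesis by (simp add: lin_def)
qed

lemma rpoly_mv: "(\<lambda>x r. f (mv M x) r) \<in> rpoly" if "f \<in> rpoly"
  using that
proof induction
  case (rcoord j)
  have "(\<lambda>x r. \<Sum>k\<in>UNIV. M j k * x k) \<in> rpoly"
    by (rule rpoly_sum) (auto intro: rpoly_cmul rpoly.rcoord)
  then show ?case by (simp add: mv_def)
qed (auto intro: rpoly.intros)

lemma lin_line: "lin a (line x v t) = lin a x + t * lin a v"
  by (simp add: lin_def line_def distrib_left sum.distrib sum_distrib_left mult.left_commute)

lemma mv_line: "mv M (line x v t) = line (mv M x) (mv M v) t"
  by (simp add: mv_def line_def distrib_left sum.distrib sum_distrib_left mult.left_commute)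

lemma mv_mmul: "mv (mmul A B) x = mv A (mv B x)"
proof
  fix i
  have "(\<Sum>k\<in>UNIV. (\<Sum>j\<in>UNIV. A i j * B j k) * x k) = (\<Sum>j\<in>UNIV. A i j * (\<Sum>k\<in>UNIV. B j k * x k))"
    by (simp add: sum_distrib_left sum_distrib_right mult.assoc) (rule sum.swap)
  then show "mv (mmul A B) x i = mv A (mv B x) i" by (simp add: mv_def mmul_def)
qed

lemma mv_idm: "mv idm x = x"
proof
  fix i show "mv idm x i = x i"
  proof -
    have "(\<Sum>j\<in>UNIV. (if i = j then 1 else 0) * x j) = (\<Sum>j\<in>UNIV. if i = j then x j else 0)"
      by (rule sum.cong) auto
    then show ?thesis by (simp add: mv_def idm_def)
  qed
qed

lemma lin_mv: "lin a (mv M x) = lin (funct_act M a) x"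
proof -
  have "(\<Sum>i\<in>UNIV. a i * (\<Sum>j\<in>UNIV. M i j * x j)) = (\<Sum>j\<in>UNIV. (\<Sum>i\<in>UNIV. a i * M i j) * x j)"
    by (simp add: sum_distrib_left sum_distrib_right mult.assoc) (rule sum.swap)
  then show ?thesis by (simp add: lin_def mv_def funct_act_def)
qed

lemma rpoly_cancel:
  assumes a: "a \<noteq> (\<lambda>j. 0)" and h: "h \<in> rpoly" and z: "\<forall>x. lin a x * h x r = 0"
  shows "h x r = 0"
proof -
  obtain j where j: "a j \<noteq> 0" using a by auto
  define v where "v = (\<lambda>k. if k = j then (1::complex) else 0)"
  have lv: "lin a v = a j" by (simp add: lin_def v_def if_distrib cong: if_cong)
  obtain p where p: "\<forall>t. h (line x v t) r = poly p t" using rpoly_line[OF h] by blast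
  define t0 where "t0 = - lin a x / a j"
  have "{t. t \<noteq> t0} \<subseteq> {t. poly p t = 0}"
  proof
    fix t assume "t \<in> {t. t \<noteq> t0}"
    then have "lin a x + t * a j \<noteq> 0"
    proof (intro notI)
      assume "lin a x + t * a j = 0"
      then have "t * a j = - lin a x" by (simp add: add_eq_0_iff)
      then have "t = t0" using j unfolding t0_def by (simp add: field_simps)
      then show False using \<open>t \<in> {t. t \<noteq> t0}\<close> by simp
    qed
    moreover have "lin a (line x v t) * h (line x v t) r = 0" using z by blast
    ultimately show "t \<in> {t. poly p t = 0}" using p by (simp add: lin_line lv)
  qed
  moreover have "infinite {t::complex. t \<noteq> t0}"
  proof -
    have "{t::complex. t \<noteq> t0} = UNIV - {t0}" by auto
    then show ?thesis by (simp add: infinite_UNIV_char_0)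
  qed
  ultimately have "p = 0" using poly_roots_finite[of p] finite_subset by blast
  then show ?thesis using p[rule_format, of 0] by (simp add: line_def)
qed

lemma nonvanish:
  fixes S :: "(('n::finite \<Rightarrow> complex) \<Rightarrow> complex) set"
  assumes "finite S" "\<forall>g\<in>S. (\<forall>x v. \<exists>p. \<forall>t. g (line x v t) = poly p t) \<and> (\<exists>y. g y \<noteq> 0)"
  shows "\<exists>x. \<forall>g\<in>S. g x \<noteq> 0"
  using assms
proof (induction S)
  case empty then show ?case by simp
next
  case (insert f S)
  then obtain x where x: "\<forall>g\<in>S. g x \<noteq> 0" by auto
  obtain y where y: "f y \<noteq> 0" using insert.prems by auto
  define v where "v = (\<lambda>j. y j - x j)"
  have "\<forall>g\<in>insert f S. \<exists>p. \<forall>t. g (line x v t) = poly p t" using insert.prems by blast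
  then obtain P where P: "\<forall>g\<in>insert f S. \<forall>t. g (line x v t) = poly (P g) t" by metis
  have l0: "line x v 0 = x" by (simp add: line_def)
  have l1: "line x v 1 = y" by (simp add: line_def v_def)
  have nz: "\<forall>g\<in>insert f S. P g \<noteq> 0"
  proof
    fix g assume g: "g \<in> insert f S"
    show "P g \<noteq> 0"
    proof
      assume "P g = 0"
      moreover have "\<forall>t. g (line x v t) = poly (P g) t" using P g by blast
      ultimately have "\<forall>t. g (line x v t) = 0" by simp
      then show False using x y l0 l1 g by (metis insert_iff)
    qed
  qed
  define Q where "Q = (\<Prod>g\<in>insert f S. P g)"
  have "Q \<noteq> 0" unfolding Q_def using nz insert.hyps by (simp add: prod_zero_iff)
  then have "finite {t. poly Q t = 0}" by (rule poly_roots_finite)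
  then obtain t where t: "poly Q t \<noteq> 0" using ex_new_if_finite[OF infinite_UNIV_char_0] by blast
  have "\<forall>g\<in>insert f S. poly (P g) t \<noteq> 0"
    using t insert.hyps unfolding Q_def by (auto simp: poly_prod prod_zero_iff)
  then show ?case using P by (metis (no_types, lifting))
qed

lemma lp_rpoly: "f \<in> rpoly \<Longrightarrow> \<forall>x v. \<exists>p. \<forall>t. f (line x v t) r = poly p t"
  using rpoly_line by blast

lemma lp_mv: "\<forall>x v. \<exists>p. \<forall>t. (\<lambda>y. mv M y j - y j) (line x v t) = poly p t"
proof (intro allI)
  fix x v
  show "\<exists>p. \<forall>t. (\<lambda>y. mv M y j - y j) (line x v t) = poly p t"
    by (rule exI[of _ "[:mv M x j - x j, mv M v j - v j:]"]) (simp only: mv_line, simp add: line_def algebra_simps)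
qed

inductive_set rcpoly :: "(('n::finite \<Rightarrow> complex) \<Rightarrow> complex \<Rightarrow> complex) set" where
  rcconst: "(\<lambda>x r. c) \<in> rcpoly"
| rcvar: "(\<lambda>x r. r) \<in> rcpoly"
| rcadd: "f \<in> rcpoly \<Longrightarrow> g \<in> rcpoly \<Longrightarrow> f + g \<in> rcpoly"
| rcmult: "f \<in> rcpoly \<Longrightarrow> g \<in> rcpoly \<Longrightarrow> f * g \<in> rcpoly"

lemma rpoly_add: "f \<in> rpoly \<Longrightarrow> g \<in> rpoly \<Longrightarrow> f + g \<in> rpoly"
proof -
  assume "f \<in> rpoly" "g \<in> rpoly"
  then have "(\<lambda>x r. f x r + g x r) \<in> rpoly" by (rule rpoly.radd)
  moreover have "(\<lambda>x r. f x r + g x r) = f + g" by (simp add: fun_eq_iff)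
  ultimately show ?thesis by simp
qed

lemma rpoly_mult: "f \<in> rpoly \<Longrightarrow> g \<in> rpoly \<Longrightarrow> f * g \<in> rpoly"
proof -
  assume "f \<in> rpoly" "g \<in> rpoly"
  then have "(\<lambda>x r. f x r * g x r) \<in> rpoly" by (rule rpoly.rmult)
  moreover have "(\<lambda>x r. f x r * g x r) = f * g" by (simp add: fun_eq_iff)
  ultimately show ?thesis by simp
qed

lemma rpoly_const: "(\<lambda>x r. c) \<in> rpoly" by (rule rpoly.rconst)

lemma rpoly_0: "0 \<in> rpoly"
  unfolding zero_fun_def by (rule rpoly.rconst)

lemma rpoly_1: "1 \<in> rpoly"
  unfolding one_fun_def by (rule rpoly.rconst)

lemma rpoly_uminus: "f \<in> rpoly \<Longrightarrow> - f \<in> rpoly"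
proof -
  assume "f \<in> rpoly"
  then have "(\<lambda>x r. (-1) * f x r) \<in> rpoly" by (rule rpoly_cmul)
  moreover have "(\<lambda>x r. (-1) * f x r) = - f" by (simp add: fun_eq_iff)
  ultimately show ?thesis by (simp only:)
qed

lemma rpoly_diff: "f \<in> rpoly \<Longrightarrow> g \<in> rpoly \<Longrightarrow> f - g \<in> rpoly"
proof -
  assume "f \<in> rpoly" "g \<in> rpoly"
  then have "f + - g \<in> rpoly" by (intro rpoly_add rpoly_uminus)
  then show ?thesis by (simp only: diff_conv_add_uminus)
qed

lemma rcpoly_rpoly: "f \<in> rcpoly \<Longrightarrow> f \<in> rpoly"
proof (induction rule: rcpoly.induct)
  case (rcconst c) show ?case by (rule rpoly.rconst)
next
  case rcvar show ?case by (rule rpoly.rvar)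
next
  case (rcadd f g) then show ?case using rpoly_add by blast
next
  case (rcmult f g) then show ?case using rpoly_mult by blast
qed

lemma rcpoly_indep: "f \<in> rcpoly \<Longrightarrow> f x r = f y r"
  by (induction rule: rcpoly.induct) (simp_all only: plus_fun_apply times_fun_apply)

lemma rcpoly_0: "0 \<in> rcpoly"
  unfolding zero_fun_def by (rule rcpoly.rcconst)

lemma rcpoly_uminus: "f \<in> rcpoly \<Longrightarrow> - f \<in> rcpoly"
proof -
  assume "f \<in> rcpoly"
  then have "(\<lambda>x r. (-1)) * f \<in> rcpoly" by (intro rcpoly.rcmult rcpoly.rcconst)
  moreover have "(\<lambda>x r. (-1)) * f = - f" by (simp add: fun_eq_iff)
  ultimately show ?thesis by (simp only:)
qed

lemma rcpoly_sum: "finite K \<Longrightarrow> \<forall>k\<in>K. g k \<in> rcpoly \<Longrightarrow> (\<Sum>k\<in>K. g k) \<in> rcpoly"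
  by (induction K rule: finite_induct) (auto intro: rcpoly_0 rcpoly.rcadd)

lemma rpoly_sum': "finite K \<Longrightarrow> \<forall>k\<in>K. g k \<in> rpoly \<Longrightarrow> (\<Sum>k\<in>K. g k) \<in> rpoly"
  by (induction K rule: finite_induct) (auto intro: rpoly_0 rpoly_add)


lemma sum_fun_apply2: "(\<Sum>k\<in>K. (f k :: 'a \<Rightarrow> 'b \<Rightarrow> 'c::comm_monoid_add)) x r = (\<Sum>k\<in>K. f k x r)"
proof (cases "finite K")
  case True then show ?thesis by (induction K) simp_all
next
  case False then show ?thesis by simp
qed

lemma lin_zero: "lin a (\<lambda>j. 0) = 0" by (simp add: lin_def)
lemma mv_zero: "mv M (\<lambda>j. 0) = (\<lambda>j. 0)" by (simp add: mv_def)
lemma line0: "line (\<lambda>j. 0) v t = (\<lambda>j. t * v j)" by (simp add: line_def)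
lemma lin_unit: "lin (\<lambda>k. if k = j then 1 else 0) v = v j"
proof -
  have "(\<Sum>k\<in>UNIV. (if k = j then 1 else 0) * v k) = (\<Sum>k\<in>UNIV. if k = j then v k else 0)"
    by (rule sum.cong) auto
  then show ?thesis by (simp add: lin_def)
qed
lemma mv_id_imp:
  fixes M :: "'n::finite \<Rightarrow> 'n \<Rightarrow> complex"
  assumes h: "\<forall>x. mv M x = x" shows "M = idm"
proof (intro ext)
  fix i k :: 'n
  define e where "e = (\<lambda>j::'n. if j = k then (1::complex) else 0)"
  have "mv M e i = (\<Sum>j\<in>UNIV. if j = k then M i j else 0)"
    unfolding mv_def e_def by (rule sum.cong) auto
  also have "\<dots> = M i k" by simp
  finally have "M i k = e i" using h by simp
  then show "M i k = idm i k" by (simp add: e_def idm_def)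
qed

locale hk = group W for W :: "'w monoid" +
  fixes \<rho> :: "'w \<Rightarrow> 'n::finite \<Rightarrow> 'n \<Rightarrow> complex"
    and W0 R :: "'w set"
    and I :: "'i set"
    and \<alpha> :: "'i \<Rightarrow> 'n \<Rightarrow> complex"
    and hc :: "'i \<Rightarrow> 'n \<Rightarrow> complex"
    and s :: "'i \<Rightarrow> 'w"
    and c :: "'i \<Rightarrow> complex"
    and cocyc :: "'w \<Rightarrow> 'w \<Rightarrow> complex"
    and \<iota> :: "(('n \<Rightarrow> complex) \<Rightarrow> complex \<Rightarrow> complex) \<Rightarrow> 'h::ring_1"
    and N :: "'w \<Rightarrow> 'h"
  assumes fin: "finite (carrier W)"
    and rep_hom: "\<forall>w\<in>carrier W. \<forall>v\<in>carrier W. \<rho> (w \<otimes>\<^bsub>W\<^esub> v) = mmul (\<rho> w) (\<rho> v)"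
    and rep_one: "\<rho> \<one>\<^bsub>W\<^esub> = idm"
    and W0_normal: "W0 \<lhd> W" and R_sub: "subgroup R W"
    and W0_R_prod: "W0 <#>\<^bsub>W\<^esub> R = carrier W"
    and s_in: "\<forall>i\<in>I. s i \<in> W0"
    and W0_gen: "W0 = generate W (s ` I)"
    and alpha_nz: "\<forall>i\<in>I. \<alpha> i \<noteq> (\<lambda>j. 0)"
    and coroot: "\<forall>i\<in>I. lin (\<alpha> i) (hc i) = 2"
    and refl: "\<forall>i\<in>I. \<forall>x. mv (\<rho> (s i)) x = (\<lambda>j. x j - lin (\<alpha> i) x * hc i j)"
    and nat_nz: "\<forall>w\<in>carrier W. \<forall>v\<in>carrier W. cocyc w v \<noteq> 0"
    and H: "is_graded_hecke W \<rho> R I \<alpha> s c cocyc \<iota> N"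
begin

definition act :: "'w \<Rightarrow> (('n \<Rightarrow> complex) \<Rightarrow> complex \<Rightarrow> complex) \<Rightarrow> (('n \<Rightarrow> complex) \<Rightarrow> complex \<Rightarrow> complex)" where
  "act w f = ract (\<rho> (inv\<^bsub>W\<^esub> w)) f"

lemmas HH = H[unfolded is_graded_hecke_def]

lemma act_apply: "act w f x r = f (mv (\<rho> (inv\<^bsub>W\<^esub> w)) x) r"
  by (simp add: act_def ract_def)

lemma iota_add0: "f \<in> rpoly \<Longrightarrow> g \<in> rpoly \<Longrightarrow> \<iota> (\<lambda>x r. f x r + g x r) = \<iota> f + \<iota> g"
  using HH[THEN conjunct1] by blast
lemma iota_mult0: "f \<in> rpoly \<Longrightarrow> g \<in> rpoly \<Longrightarrow> \<iota> (\<lambda>x r. f x r * g x r) = \<iota> f * \<iota> g"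
  using HH[THEN conjunct2, THEN conjunct1] by blast
lemma iota_const_central: "\<iota> (\<lambda>x r. a) * h = h * \<iota> (\<lambda>x r. a)"
  using HH[THEN conjunct2, THEN conjunct2, THEN conjunct2, THEN conjunct1] by blast
lemma iota_r_central: "\<iota> (\<lambda>x r. r) * h = h * \<iota> (\<lambda>x r. r)"
  using HH[THEN conjunct2, THEN conjunct2, THEN conjunct2, THEN conjunct2, THEN conjunct1] by blast
lemma N_one: "N \<one>\<^bsub>W\<^esub> = 1"
  using HH[THEN conjunct2, THEN conjunct2, THEN conjunct2, THEN conjunct2, THEN conjunct2, THEN conjunct1] by blast
lemma N_mult: "w \<in> carrier W \<Longrightarrow> v \<in> carrier W \<Longrightarrow> N w * N v = \<iota> (\<lambda>x r. cocyc w v) * N (w \<otimes>\<^bsub>W\<^esub> v)"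
  using HH[THEN conjunct2, THEN conjunct2, THEN conjunct2, THEN conjunct2, THEN conjunct2, THEN conjunct2, THEN conjunct1] by blast
lemma decomp: "\<exists>!F. (\<forall>w. w \<notin> carrier W \<longrightarrow> F w = (\<lambda>x r. 0)) \<and> (\<forall>w\<in>carrier W. F w \<in> rpoly) \<and>
              h = (\<Sum>w\<in>carrier W. N w * \<iota> (F w))"
  using HH[THEN conjunct2, THEN conjunct2, THEN conjunct2, THEN conjunct2, THEN conjunct2, THEN conjunct2, THEN conjunct2, THEN conjunct1] by blast
lemma cross0: "i \<in> I \<Longrightarrow> f \<in> tpoly \<Longrightarrow>
        N (s i) * \<iota> (\<lambda>x r. f x) - \<iota> (\<lambda>x r. tact (\<rho> (inv\<^bsub>W\<^esub> (s i))) f x) * N (s i)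
        = \<iota> (\<lambda>x r. c i * r * divdiff (\<alpha> i) f (tact (\<rho> (inv\<^bsub>W\<^esub> (s i))) f) x)"
  using HH[THEN conjunct2, THEN conjunct2, THEN conjunct2, THEN conjunct2, THEN conjunct2, THEN conjunct2, THEN conjunct2, THEN conjunct2, THEN conjunct1] by blast
lemma Rrel0: "w \<in> R \<Longrightarrow> f \<in> tpoly \<Longrightarrow>
        N w * \<iota> (\<lambda>x r. f x) = \<iota> (\<lambda>x r. tact (\<rho> (inv\<^bsub>W\<^esub> w)) f x) * N w"
  using HH[THEN conjunct2, THEN conjunct2, THEN conjunct2, THEN conjunct2, THEN conjunct2, THEN conjunct2, THEN conjunct2, THEN conjunct2, THEN conjunct2] by blast

lemma iota_add: "f \<in> rpoly \<Longrightarrow> g \<in> rpoly \<Longrightarrow> \<iota> (f + g) = \<iota> f + \<iota> g"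
  using iota_add0[of f g] by (simp add: plus_fun_def)
lemma iota_mult: "f \<in> rpoly \<Longrightarrow> g \<in> rpoly \<Longrightarrow> \<iota> (f * g) = \<iota> f * \<iota> g"
  using iota_mult0[of f g] by (simp add: times_fun_def)
lemma iota_one: "\<iota> 1 = 1"
proof -
  have "\<iota> (\<lambda>x r. 1) = 1" using HH[THEN conjunct2, THEN conjunct2, THEN conjunct1] .
  moreover have "(1::('n \<Rightarrow> complex) \<Rightarrow> complex \<Rightarrow> complex) = (\<lambda>x r. 1)" unfolding one_fun_def ..
  ultimately show ?thesis by (simp only:)
qed
lemma iota_zero: "\<iota> 0 = 0"
proof -
  have "\<iota> (0 + 0) = \<iota> 0 + \<iota> 0" by (rule iota_add) (rule rpoly_0)+
  then have "\<iota> 0 + \<iota> 0 = \<iota> 0 + 0" by (metis add.right_neutral)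
  then show ?thesis by (rule add_left_imp_eq)
qed
lemma iota_zero_lam [simp]: "\<iota> (\<lambda>x r. 0) = 0"
  using iota_zero unfolding zero_fun_def .
lemma iota_uminus: "f \<in> rpoly \<Longrightarrow> \<iota> (- f) = - \<iota> f"
proof -
  assume f: "f \<in> rpoly"
  have "\<iota> (f + - f) = \<iota> f + \<iota> (- f)" by (rule iota_add) (rule f, rule rpoly_uminus, rule f)
  moreover have "f + - f = 0" by (rule add.right_inverse)
  ultimately have "\<iota> f + \<iota> (- f) = 0" using iota_zero by metis
  then show ?thesis by (metis add.commute add_eq_0_iff2 neg_eq_iff_add_eq_0)
qed
lemma iota_diff: "f \<in> rpoly \<Longrightarrow> g \<in> rpoly \<Longrightarrow> \<iota> (f - g) = \<iota> f - \<iota> g"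
proof -
  assume fg: "f \<in> rpoly" "g \<in> rpoly"
  have "\<iota> (f - g) = \<iota> (f + - g)" by (simp only: diff_conv_add_uminus)
  also have "\<dots> = \<iota> f + \<iota> (- g)" using fg by (intro iota_add rpoly_uminus)
  also have "\<dots> = \<iota> f - \<iota> g" using fg by (simp only: iota_uminus diff_conv_add_uminus)
  finally show ?thesis .
qed
lemma iota_sum: "finite K \<Longrightarrow> \<forall>k\<in>K. g k \<in> rpoly \<Longrightarrow> \<iota> (\<Sum>k\<in>K. g k) = (\<Sum>k\<in>K. \<iota> (g k))"
proof (induction K rule: finite_induct)
  case empty show ?case by (simp only: sum.empty iota_zero)
next
  case (insert k K)
  have "\<iota> (\<Sum>k\<in>insert k K. g k) = \<iota> (g k + (\<Sum>k\<in>K. g k))"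
    by (simp only: sum.insert[OF insert.hyps(1,2)])
  also have "\<dots> = \<iota> (g k) + \<iota> (\<Sum>k\<in>K. g k)"
    using insert by (intro iota_add rpoly_sum') auto
  also have "\<dots> = (\<Sum>k\<in>insert k K. \<iota> (g k))"
    using insert.IH insert.prems by (simp only: sum.insert[OF insert.hyps(1,2)]) simp
  finally show ?case .
qed
lemma iota_comm: "f \<in> rpoly \<Longrightarrow> g \<in> rpoly \<Longrightarrow> \<iota> f * \<iota> g = \<iota> g * \<iota> f"
  by (metis iota_mult mult.commute)

lemma rc_central: "f \<in> rcpoly \<Longrightarrow> \<iota> f * h = h * \<iota> f"
proof (induction f arbitrary: h rule: rcpoly.induct)
  case (rcconst c) then show ?case by (rule iota_const_central)
next
  case rcvar then show ?case by (rule iota_r_central)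
next
  case (rcadd f g)
  have e: "\<iota> (f + g) = \<iota> f + \<iota> g" using rcadd.hyps by (intro iota_add rcpoly_rpoly)
  show ?case unfolding e using rcadd.IH by (simp add: distrib_left distrib_right)
next
  case (rcmult f g)
  have e: "\<iota> (f * g) = \<iota> f * \<iota> g" using rcmult.hyps by (intro iota_mult rcpoly_rpoly)
  show ?case unfolding e using rcmult.IH by (metis mult.assoc)
qed

lemma iota_scal_inv: "a \<noteq> 0 \<Longrightarrow> \<iota> (\<lambda>x r. inverse a) * \<iota> (\<lambda>x r. a) = 1"
proof -
  assume a: "a \<noteq> 0"
  have "\<iota> (\<lambda>x r. inverse a) * \<iota> (\<lambda>x r. a) = \<iota> (\<lambda>x r. inverse a * a)"
    by (rule iota_mult0[symmetric]) (auto intro: rpoly.rconst)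
  also have "\<dots> = 1" using a iota_one by (simp add: one_fun_def)
  finally show ?thesis .
qed

lemma s_carrier: "i \<in> I \<Longrightarrow> s i \<in> carrier W"
proof -
  assume "i \<in> I"
  then have "s i \<in> W0" using s_in by blast
  moreover have "subgroup W0 W" using W0_normal by (rule normal_imp_subgroup)
  ultimately show ?thesis by (metis subgroup.mem_carrier)
qed
lemma R_carrier: "w \<in> R \<Longrightarrow> w \<in> carrier W"
  using R_sub by (metis subgroup.mem_carrier)

lemma gen_principle:
  assumes P1: "P \<one>\<^bsub>W\<^esub>" and Ps: "\<forall>i\<in>I. P (s i)" and PR: "\<forall>w\<in>R. P w"
    and Pm: "\<forall>w\<in>carrier W. \<forall>v\<in>carrier W. P w \<longrightarrow> P v \<longrightarrow> P (w \<otimes>\<^bsub>W\<^esub> v)"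
    and w: "w \<in> carrier W"
  shows "P w"
proof -
  have sub: "s ` I \<subseteq> carrier W" using s_carrier by blast
  have pw: "P (x [^]\<^bsub>W\<^esub> (n::nat))" if x: "x \<in> carrier W" "P x" for x n
    by (induction n) (auto simp: P1 x Pm)
  have pinv: "P (inv\<^bsub>W\<^esub> x)" if x: "x \<in> carrier W" "P x" for x
  proof -
    have o: "Coset.order W > 0" using fin by (simp add: order_gt_0_iff_finite)
    have "x [^]\<^bsub>W\<^esub> (Coset.order W - 1) \<otimes>\<^bsub>W\<^esub> x = x [^]\<^bsub>W\<^esub> Coset.order W"
      using o nat_pow_Suc[of x "Coset.order W - 1"] by simp
    also have "\<dots> = \<one>\<^bsub>W\<^esub>" using x pow_order_eq_1 by blast
    finally have "inv\<^bsub>W\<^esub> x = x [^]\<^bsub>W\<^esub> (Coset.order W - 1)"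
      using x by (intro inv_equality) auto
    then show ?thesis using pw[OF x] by simp
  qed
  have gen: "P y" if "y \<in> generate W (s ` I)" for y
    using that
  proof induction
    case one then show ?case by (rule P1)
  next
    case (incl h) then show ?case using Ps by auto
  next
    case (inv h) then show ?case using Ps sub pinv by auto
  next
    case (eng h1 h2) then show ?case using Pm generate_in_carrier[OF sub] by blast
  qed
  have "w \<in> W0 <#>\<^bsub>W\<^esub> R" using w W0_R_prod by simp
  then obtain a b where ab: "a \<in> W0" "b \<in> R" "w = a \<otimes>\<^bsub>W\<^esub> b"
    unfolding set_mult_def by blast
  have "a \<in> carrier W" using ab W0_gen generate_in_carrier[OF sub] by blast
  then show ?thesis using ab gen W0_gen PR R_carrier Pm by metis
qed

lemma act_mult: "w \<in> carrier W \<Longrightarrow> v \<in> carrier W \<Longrightarrow> act (w \<otimes>\<^bsub>W\<^esub> v) f = act w (act v f)"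
proof -
  assume wv: "w \<in> carrier W" "v \<in> carrier W"
  then have e: "\<rho> (inv\<^bsub>W\<^esub> (w \<otimes>\<^bsub>W\<^esub> v)) = mmul (\<rho> (inv\<^bsub>W\<^esub> v)) (\<rho> (inv\<^bsub>W\<^esub> w))"
  proof -
    have "inv\<^bsub>W\<^esub> (w \<otimes>\<^bsub>W\<^esub> v) = inv\<^bsub>W\<^esub> v \<otimes>\<^bsub>W\<^esub> inv\<^bsub>W\<^esub> w"
      using wv by (rule inv_mult_group)
    moreover have "inv\<^bsub>W\<^esub> v \<in> carrier W" "inv\<^bsub>W\<^esub> w \<in> carrier W" using wv by auto
    ultimately show ?thesis using rep_hom by metis
  qed
  show ?thesis unfolding act_def ract_def e mv_mmul ..
qed
lemma act_one: "act \<one>\<^bsub>W\<^esub> f = f"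
  by (simp add: act_def ract_def rep_one mv_idm)
lemma act_rpoly: "f \<in> rpoly \<Longrightarrow> act w f \<in> rpoly"
  unfolding act_def ract_def by (rule rpoly_mv)
lemma act_add: "act w (f + g) = act w f + act w g"
  by (simp add: act_def ract_def fun_eq_iff)
lemma act_times: "act w (f * g) = act w f * act w g"
  by (simp add: act_def ract_def fun_eq_iff)
lemma act_diff: "act w (f - g) = act w f - act w g"
  by (simp add: act_def ract_def fun_eq_iff)
lemma act_uminus: "act w (- g) = - act w g"
  by (simp add: act_def ract_def fun_eq_iff)
lemma act_const: "act w (\<lambda>x r. a) = (\<lambda>x r. a)"
  by (simp add: act_def ract_def fun_eq_iff)
lemma act_rv: "act w (\<lambda>x r. r) = (\<lambda>x r. r)"
  by (simp add: act_def ract_def fun_eq_iff)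
lemma act_zero: "act w 0 = 0"
  by (simp add: act_def ract_def fun_eq_iff)
lemma act_lin: "act w (\<lambda>x r. lin a x) = (\<lambda>x r. lin (funct_act (\<rho> (inv\<^bsub>W\<^esub> w)) a) x)"
  unfolding act_def ract_def lin_mv ..
lemma act_inv_cancel: "w \<in> carrier W \<Longrightarrow> act w (act (inv\<^bsub>W\<^esub> w) f) = f"
proof -
  assume w: "w \<in> carrier W"
  then have "inv\<^bsub>W\<^esub> w \<in> carrier W" by (rule inv_closed)
  then have "act w (act (inv\<^bsub>W\<^esub> w) f) = act (w \<otimes>\<^bsub>W\<^esub> inv\<^bsub>W\<^esub> w) f"
    using w by (simp only: act_mult)
  also have "w \<otimes>\<^bsub>W\<^esub> inv\<^bsub>W\<^esub> w = \<one>\<^bsub>W\<^esub>" using w by (rule r_inv)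
  finally show ?thesis by (simp only: act_one)
qed
lemma act_inv_cancel2: "w \<in> carrier W \<Longrightarrow> act (inv\<^bsub>W\<^esub> w) (act w f) = f"
proof -
  assume w: "w \<in> carrier W"
  then have "inv\<^bsub>W\<^esub> w \<in> carrier W" by (rule inv_closed)
  then have "act (inv\<^bsub>W\<^esub> w) (act w f) = act (inv\<^bsub>W\<^esub> w \<otimes>\<^bsub>W\<^esub> w) f"
    using w by (simp only: act_mult)
  also have "inv\<^bsub>W\<^esub> w \<otimes>\<^bsub>W\<^esub> w = \<one>\<^bsub>W\<^esub>" using w by (rule l_inv)
  finally show ?thesis by (simp only: act_one)
qed


lemma lin_sub_smult: "lin a (\<lambda>j. y j - k * h j) = lin a y - k * lin a h"
  by (simp add: lin_def right_diff_distrib sum_subtractf sum_distrib_left mult.left_commute)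

lemma refl_invol: "i \<in> I \<Longrightarrow> mv (\<rho> (s i)) (mv (\<rho> (s i)) y) = y"
proof -
  assume i: "i \<in> I"
  have r: "\<And>z. mv (\<rho> (s i)) z = (\<lambda>j. z j - lin (\<alpha> i) z * hc i j)" using refl i by blast
  have "lin (\<alpha> i) (\<lambda>j. y j - lin (\<alpha> i) y * hc i j) = lin (\<alpha> i) y - lin (\<alpha> i) y * 2"
    using coroot i by (simp add: lin_sub_smult)
  then show ?thesis unfolding r by (simp add: fun_eq_iff algebra_simps)
qed

lemma refl_inv: "i \<in> I \<Longrightarrow> mv (\<rho> (inv\<^bsub>W\<^esub> (s i))) x = mv (\<rho> (s i)) x"
proof -
  assume i: "i \<in> I"
  have S: "s i \<in> carrier W" using i by (rule s_carrier)
  then have iS: "inv\<^bsub>W\<^esub> (s i) \<in> carrier W" by (rule inv_closed)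
  have "mmul (\<rho> (inv\<^bsub>W\<^esub> (s i))) (\<rho> (s i)) = \<rho> (inv\<^bsub>W\<^esub> (s i) \<otimes>\<^bsub>W\<^esub> s i)"
    using rep_hom S iS by metis
  also have "inv\<^bsub>W\<^esub> (s i) \<otimes>\<^bsub>W\<^esub> s i = \<one>\<^bsub>W\<^esub>" using S by (rule l_inv)
  finally have m: "mmul (\<rho> (inv\<^bsub>W\<^esub> (s i))) (\<rho> (s i)) = idm" using rep_one by simp
  have "mv (\<rho> (inv\<^bsub>W\<^esub> (s i))) x = mv (\<rho> (inv\<^bsub>W\<^esub> (s i))) (mv (\<rho> (s i)) (mv (\<rho> (s i)) x))"
    using refl_invol[OF i] by simp
  also have "\<dots> = mv (mmul (\<rho> (inv\<^bsub>W\<^esub> (s i))) (\<rho> (s i))) (mv (\<rho> (s i)) x)"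
    by (simp only: mv_mmul)
  also have "\<dots> = mv (\<rho> (s i)) x" by (simp only: m mv_idm)
  finally show ?thesis .
qed

lemma act_s: "i \<in> I \<Longrightarrow> act (s i) f x r = f (\<lambda>j. x j - lin (\<alpha> i) x * hc i j) r"
  using refl by (simp add: act_apply refl_inv)

lemma divdiff_coord: "i \<in> I \<Longrightarrow>
   divdiff (\<alpha> i) (\<lambda>x. x j) (tact (\<rho> (inv\<^bsub>W\<^esub> (s i))) (\<lambda>x. x j)) = (\<lambda>x. hc i j)"
proof -
  assume i: "i \<in> I"
  have t: "tact (\<rho> (inv\<^bsub>W\<^esub> (s i))) (\<lambda>x. x j) x = x j - lin (\<alpha> i) x * hc i j" for x
    using refl i by (simp add: tact_def refl_inv)
  show ?thesis unfolding divdiff_def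
  proof (rule the_equality)
    show "(\<lambda>x. hc i j) \<in> tpoly \<and> (\<forall>x. lin (\<alpha> i) x * hc i j = x j - tact (\<rho> (inv\<^bsub>W\<^esub> (s i))) (\<lambda>x. x j) x)"
      by (simp add: t tpoly.tconst)
  next
    fix h assume h: "h \<in> tpoly \<and> (\<forall>x. lin (\<alpha> i) x * h x = x j - tact (\<rho> (inv\<^bsub>W\<^esub> (s i))) (\<lambda>x. x j) x)"
    have hr: "(\<lambda>x r. h x - hc i j) \<in> rpoly"
      using h tpoly_rpoly rpoly_minus rpoly.rconst by blast
    have "\<forall>x. lin (\<alpha> i) x * (h x - hc i j) = 0" using h by (simp add: t right_diff_distrib)
    then have "h x - hc i j = 0" for x
      using rpoly_cancel[of "\<alpha> i" "\<lambda>x r. h x - hc i j" 0 x] hr alpha_nz i by simp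
    then show "h = (\<lambda>x. hc i j)" by (simp add: fun_eq_iff)
  qed
qed

definition cr :: "'i \<Rightarrow> ('n \<Rightarrow> complex) \<Rightarrow> complex \<Rightarrow> complex" where
  "cr i = (\<lambda>x r. c i * r)"

lemma cr_rc: "cr i \<in> rcpoly"
proof -
  have e: "cr i = (\<lambda>x r. c i) * (\<lambda>x r. r)" by (simp add: cr_def fun_eq_iff)
  show ?thesis unfolding e by (intro rcpoly.rcmult rcpoly.rcconst rcpoly.rcvar)
qed

lemma cr_rpoly: "cr i \<in> rpoly" using cr_rc by (rule rcpoly_rpoly)

lemma cross_gen:
  assumes i: "i \<in> I" and f: "f \<in> rpoly"
  shows "\<exists>h\<in>rpoly. (\<forall>x r. lin (\<alpha> i) x * h x r = f x r - act (s i) f x r) \<and>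
            N (s i) * \<iota> f - \<iota> (act (s i) f) * N (s i) = \<iota> (cr i * h)"
  using f
proof induction
  case (rconst a)
  have "\<iota> (cr i * 0) = 0" by (simp only: mult_zero_right iota_zero)
  then show ?case using iota_const_central[of a "N (s i)"]
    by (intro bexI[of _ 0]) (simp_all add: act_const rpoly_0)
next
  case (rcoord j)
  have e1: "(\<lambda>x r. tact (\<rho> (inv\<^bsub>W\<^esub> (s i))) (\<lambda>x. x j) x) = act (s i) (\<lambda>x r. x j)"
    by (simp add: act_def ract_def tact_def)
  have e2: "(\<lambda>x r. c i * r * (\<lambda>x. hc i j) x) = cr i * (\<lambda>x r. hc i j)"
    by (rule ext)+ (simp add: cr_def)
  have "N (s i) * \<iota> (\<lambda>x r. x j) - \<iota> (act (s i) (\<lambda>x r. x j)) * N (s i) = \<iota> (cr i * (\<lambda>x r. hc i j))"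
    using cross0[OF i tpoly.tcoord[of j]] unfolding divdiff_coord[OF i] e1 e2 .
  moreover have "\<forall>x r. lin (\<alpha> i) x * hc i j = x j - act (s i) (\<lambda>x r. x j) x r"
    using i by (simp add: act_s)
  ultimately show ?case by (intro bexI[of _ "\<lambda>x r. hc i j"] conjI rpoly.rconst)
next
  case rvar
  have "\<iota> (cr i * 0) = 0" by (simp only: mult_zero_right iota_zero)
  then show ?case using iota_r_central[of "N (s i)"]
    by (intro bexI[of _ 0]) (simp_all add: act_rv rpoly_0)
next
  case (radd f g)
  from radd.IH obtain hf hg where hf: "hf \<in> rpoly" "\<forall>x r. lin (\<alpha> i) x * hf x r = f x r - act (s i) f x r"
      "N (s i) * \<iota> f - \<iota> (act (s i) f) * N (s i) = \<iota> (cr i * hf)"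
    and hg: "hg \<in> rpoly" "\<forall>x r. lin (\<alpha> i) x * hg x r = g x r - act (s i) g x r"
      "N (s i) * \<iota> g - \<iota> (act (s i) g) * N (s i) = \<iota> (cr i * hg)" by blast
  have fg: "(\<lambda>x r. f x r + g x r) = f + g" by (rule ext)+ simp
  have c1: "\<forall>x r. lin (\<alpha> i) x * (hf + hg) x r = (\<lambda>x r. f x r + g x r) x r - act (s i) (\<lambda>x r. f x r + g x r) x r"
    using hf(2) hg(2) by (simp add: act_apply distrib_left)
  have "N (s i) * \<iota> (f + g) - \<iota> (act (s i) (f + g)) * N (s i)
      = (N (s i) * \<iota> f - \<iota> (act (s i) f) * N (s i)) + (N (s i) * \<iota> g - \<iota> (act (s i) g) * N (s i))"
    using radd.hyps by (simp add: act_add iota_add act_rpoly algebra_simps)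
  also have "\<dots> = \<iota> (cr i * hf) + \<iota> (cr i * hg)" by (simp only: hf(3) hg(3))
  also have "\<dots> = \<iota> (cr i * hf + cr i * hg)"
    using hf hg cr_rpoly by (intro iota_add[symmetric] rpoly_mult)
  also have "cr i * hf + cr i * hg = cr i * (hf + hg)" by (simp only: distrib_left)
  finally have c2: "N (s i) * \<iota> (\<lambda>x r. f x r + g x r) - \<iota> (act (s i) (\<lambda>x r. f x r + g x r)) * N (s i)
      = \<iota> (cr i * (hf + hg))" unfolding fg .
  have "hf + hg \<in> rpoly" using hf(1) hg(1) rpoly_add by blast
  then show ?case using c1 c2 by blast
next
  case (rmult f g)
  from rmult.IH obtain hf hg where hf: "hf \<in> rpoly" "\<forall>x r. lin (\<alpha> i) x * hf x r = f x r - act (s i) f x r"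
      "N (s i) * \<iota> f - \<iota> (act (s i) f) * N (s i) = \<iota> (cr i * hf)"
    and hg: "hg \<in> rpoly" "\<forall>x r. lin (\<alpha> i) x * hg x r = g x r - act (s i) g x r"
      "N (s i) * \<iota> g - \<iota> (act (s i) g) * N (s i) = \<iota> (cr i * hg)" by blast
  have fg: "(\<lambda>x r. f x r * g x r) = f * g" by (rule ext)+ simp
  define h where "h = act (s i) f * hg + hf * g"
  have hr: "h \<in> rpoly" unfolding h_def using hf hg rmult.hyps by (intro rpoly_add rpoly_mult act_rpoly)
  have c1: "\<forall>x r. lin (\<alpha> i) x * h x r = (\<lambda>x r. f x r * g x r) x r - act (s i) (\<lambda>x r. f x r * g x r) x r"
  proof (intro allI)
    fix x r
    have "lin (\<alpha> i) x * h x r = act (s i) f x r * (lin (\<alpha> i) x * hg x r) + (lin (\<alpha> i) x * hf x r) * g x r"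
      by (simp add: h_def algebra_simps)
    also have "\<dots> = act (s i) f x r * (g x r - act (s i) g x r) + (f x r - act (s i) f x r) * g x r"
      using hf(2) hg(2) by (simp only:)
    also have "\<dots> = f x r * g x r - act (s i) f x r * act (s i) g x r"
      by (simp add: algebra_simps)
    finally show "lin (\<alpha> i) x * h x r = (\<lambda>x r. f x r * g x r) x r - act (s i) (\<lambda>x r. f x r * g x r) x r"
      by (simp add: act_apply)
  qed
  have ef: "N (s i) * \<iota> f = \<iota> (act (s i) f) * N (s i) + \<iota> (cr i * hf)" using hf(3) by (simp add: algebra_simps)
  have eg: "N (s i) * \<iota> g = \<iota> (act (s i) g) * N (s i) + \<iota> (cr i * hg)" using hg(3) by (simp add: algebra_simps)
  have ifg: "\<iota> (f * g) = \<iota> f * \<iota> g" using rmult.hyps by (rule iota_mult)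
  have iafg: "\<iota> (act (s i) (f * g)) = \<iota> (act (s i) f) * \<iota> (act (s i) g)"
    unfolding act_times using rmult.hyps by (intro iota_mult act_rpoly)
  have "N (s i) * \<iota> (f * g) - \<iota> (act (s i) (f * g)) * N (s i)
      = \<iota> (act (s i) f) * \<iota> (cr i * hg) + \<iota> (cr i * hf) * \<iota> g"
    unfolding ifg iafg mult.assoc[symmetric] ef
    by (simp add: algebra_simps eg)
  also have "\<dots> = \<iota> (act (s i) f * (cr i * hg)) + \<iota> (cr i * hf * g)"
    using hf hg rmult.hyps cr_rpoly by (simp add: iota_mult rpoly_mult act_rpoly)
  also have "\<dots> = \<iota> (act (s i) f * (cr i * hg) + cr i * hf * g)"
    using hf hg rmult.hyps cr_rpoly by (intro iota_add[symmetric] rpoly_mult act_rpoly)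
  also have "act (s i) f * (cr i * hg) + cr i * hf * g = cr i * h"
    unfolding h_def by (simp only: algebra_simps)
  finally have c2: "N (s i) * \<iota> (\<lambda>x r. f x r * g x r) - \<iota> (act (s i) (\<lambda>x r. f x r * g x r)) * N (s i)
      = \<iota> (cr i * h)" unfolding fg .
  show ?case using c1 c2 hr by blast
qed


lemma Rrel_gen:
  assumes w: "w \<in> R" and f: "f \<in> rpoly"
  shows "N w * \<iota> f = \<iota> (act w f) * N w"
  using f
proof induction
  case (rconst a) show ?case using iota_const_central[of a "N w"] by (simp add: act_const)
next
  case (rcoord j)
  have e1: "(\<lambda>x r. tact (\<rho> (inv\<^bsub>W\<^esub> w)) (\<lambda>x. x j) x) = act w (\<lambda>x r. x j)"
    by (simp add: act_def ract_def tact_def)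
  show ?case using Rrel0[OF w tpoly.tcoord[of j]] unfolding e1 .
next
  case rvar show ?case using iota_r_central[of "N w"] by (simp add: act_rv)
next
  case (radd f g)
  have fg: "(\<lambda>x r. f x r + g x r) = f + g" by (rule ext)+ simp
  have "N w * \<iota> (f + g) = \<iota> (act w (f + g)) * N w"
    using radd by (simp add: act_add iota_add act_rpoly algebra_simps)
  then show ?case unfolding fg .
next
  case (rmult f g)
  have fg: "(\<lambda>x r. f x r * g x r) = f * g" by (rule ext)+ simp
  have e1: "\<iota> (f * g) = \<iota> f * \<iota> g" using rmult.hyps by (rule iota_mult)
  have e2: "\<iota> (act w (f * g)) = \<iota> (act w f) * \<iota> (act w g)"
    unfolding act_times using rmult.hyps by (intro iota_mult act_rpoly)
  have "N w * \<iota> (f * g) = \<iota> (act w (f * g)) * N w"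
    unfolding e1 e2 mult.assoc[symmetric] rmult.IH(1) by (simp add: mult.assoc rmult.IH(2))
  then show ?case unfolding fg .
qed

lemma N_prod: "w \<in> carrier W \<Longrightarrow> v \<in> carrier W \<Longrightarrow>
   N (w \<otimes>\<^bsub>W\<^esub> v) = \<iota> (\<lambda>x r. inverse (cocyc w v)) * (N w * N v)"
proof -
  assume wv: "w \<in> carrier W" "v \<in> carrier W"
  then have nz: "cocyc w v \<noteq> 0" using nat_nz by blast
  have "\<iota> (\<lambda>x r. inverse (cocyc w v)) * (N w * N v)
      = (\<iota> (\<lambda>x r. inverse (cocyc w v)) * \<iota> (\<lambda>x r. cocyc w v)) * N (w \<otimes>\<^bsub>W\<^esub> v)"
    using wv by (simp add: N_mult mult.assoc)
  also have "\<dots> = N (w \<otimes>\<^bsub>W\<^esub> v)" using iota_scal_inv[OF nz] by simp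
  finally show ?thesis by simp
qed

lemma act_s_apply: "i \<in> I \<Longrightarrow> act (s i) f x r = f (mv (\<rho> (s i)) x) r"
  by (simp add: act_apply refl_inv)

lemma act_s_invol: "i \<in> I \<Longrightarrow> act (s i) (act (s i) f) = f"
  by (rule ext)+ (simp add: act_s_apply refl_invol)

lemma cancel_fun: "i \<in> I \<Longrightarrow> h \<in> rpoly \<Longrightarrow> \<forall>x r. lin (\<alpha> i) x * h x r = 0 \<Longrightarrow> h = 0"
proof -
  assume i: "i \<in> I" and h: "h \<in> rpoly" and z: "\<forall>x r. lin (\<alpha> i) x * h x r = 0"
  have "h x r = 0" for x r using rpoly_cancel[of "\<alpha> i" h r x] alpha_nz i h z by blast
  then show "h = 0" by (simp add: fun_eq_iff)
qed

lemma inv_rpoly_act: "f \<in> inv_rpoly W \<rho> \<Longrightarrow> w \<in> carrier W \<Longrightarrow> act w f = f"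
  unfolding inv_rpoly_def act_def by blast

lemma inv_commute_N:
  assumes f: "f \<in> inv_rpoly W \<rho>" and w: "w \<in> carrier W"
  shows "N w * \<iota> f = \<iota> f * N w"
proof -
  have fr: "f \<in> rpoly" using f unfolding inv_rpoly_def by blast
  show ?thesis
  proof (rule gen_principle[where P = "\<lambda>w. N w * \<iota> f = \<iota> f * N w", OF _ _ _ _ w])
    show "N \<one>\<^bsub>W\<^esub> * \<iota> f = \<iota> f * N \<one>\<^bsub>W\<^esub>" by (simp add: N_one)
  next
    show "\<forall>i\<in>I. N (s i) * \<iota> f = \<iota> f * N (s i)"
    proof
      fix i assume i: "i \<in> I"
      obtain h where h: "h \<in> rpoly" "\<forall>x r. lin (\<alpha> i) x * h x r = f x r - act (s i) f x r"
        "N (s i) * \<iota> f - \<iota> (act (s i) f) * N (s i) = \<iota> (cr i * h)"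
        using cross_gen[OF i fr] by blast
      have sf: "act (s i) f = f" using inv_rpoly_act[OF f s_carrier[OF i]] .
      have "h = 0" using cancel_fun[OF i h(1)] h(2) unfolding sf by simp
      then have "N (s i) * \<iota> f - \<iota> f * N (s i) = 0" using h(3) unfolding sf by (simp add: iota_zero)
      then show "N (s i) * \<iota> f = \<iota> f * N (s i)" by simp
    qed
  next
    show "\<forall>w\<in>R. N w * \<iota> f = \<iota> f * N w"
      using Rrel_gen[OF _ fr] inv_rpoly_act[OF f] R_carrier by metis
  next
    show "\<forall>w\<in>carrier W. \<forall>v\<in>carrier W. N w * \<iota> f = \<iota> f * N w \<longrightarrow> N v * \<iota> f = \<iota> f * N v
            \<longrightarrow> N (w \<otimes>\<^bsub>W\<^esub> v) * \<iota> f = \<iota> f * N (w \<otimes>\<^bsub>W\<^esub> v)"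
    proof (intro ballI impI)
      fix w v assume wv: "w \<in> carrier W" "v \<in> carrier W"
        and cw: "N w * \<iota> f = \<iota> f * N w" and cv: "N v * \<iota> f = \<iota> f * N v"
      have ck: "\<iota> (\<lambda>x r. inverse (cocyc w v)) * \<iota> f = \<iota> f * \<iota> (\<lambda>x r. inverse (cocyc w v))"
        by (rule iota_const_central)
      show "N (w \<otimes>\<^bsub>W\<^esub> v) * \<iota> f = \<iota> f * N (w \<otimes>\<^bsub>W\<^esub> v)"
        unfolding N_prod[OF wv] mult.assoc cv
        by (simp add: mult.assoc[symmetric] cw ck)
    qed
  qed
qed

lemma part1: "f \<in> inv_rpoly W \<rho> \<Longrightarrow> \<iota> f \<in> centre"
proof -
  assume f: "f \<in> inv_rpoly W \<rho>"
  have fr: "f \<in> rpoly" using f unfolding inv_rpoly_def by blast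
  show ?thesis unfolding centre_def
  proof (intro CollectI allI)
    fix h
    obtain F where F: "\<forall>w\<in>carrier W. F w \<in> rpoly" "h = (\<Sum>w\<in>carrier W. N w * \<iota> (F w))"
      using decomp[of h] by blast
    have "\<iota> f * h = (\<Sum>w\<in>carrier W. \<iota> f * (N w * \<iota> (F w)))" unfolding F(2) by (rule sum_distrib_left)
    also have "\<dots> = (\<Sum>w\<in>carrier W. (N w * \<iota> (F w)) * \<iota> f)"
    proof (rule sum.cong)
      fix w assume w: "w \<in> carrier W"
      have "\<iota> f * (N w * \<iota> (F w)) = N w * (\<iota> f * \<iota> (F w))"
        using inv_commute_N[OF f w] by (simp add: mult.assoc[symmetric])
      also have "\<dots> = (N w * \<iota> (F w)) * \<iota> f" using iota_comm[OF fr F(1)[rule_format, OF w]]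
        by (simp add: mult.assoc)
      finally show "\<iota> f * (N w * \<iota> (F w)) = (N w * \<iota> (F w)) * \<iota> f" .
    qed simp
    also have "\<dots> = h * \<iota> f" unfolding F(2) by (rule sum_distrib_right[symmetric])
    finally show "\<iota> f * h = h * \<iota> f" .
  qed
qed


lemma uniq0:
  assumes A: "\<forall>y\<in>carrier W. A y \<in> rpoly" and z: "(\<Sum>y\<in>carrier W. N y * \<iota> (A y)) = 0"
  shows "\<forall>y\<in>carrier W. A y = 0"
proof -
  define F1 where "F1 = (\<lambda>w. if w \<in> carrier W then A w else (\<lambda>x r. 0))"
  define F2 :: "'w \<Rightarrow> ('n \<Rightarrow> complex) \<Rightarrow> complex \<Rightarrow> complex" where "F2 = (\<lambda>w x r. 0)"
  have s1: "(\<Sum>w\<in>carrier W. N w * \<iota> (F1 w)) = 0" unfolding F1_def using z by simp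
  have s2: "(\<Sum>w\<in>carrier W. N w * \<iota> (F2 w)) = 0" unfolding F2_def by simp
  have P1: "(\<forall>w. w \<notin> carrier W \<longrightarrow> F1 w = (\<lambda>x r. 0)) \<and> (\<forall>w\<in>carrier W. F1 w \<in> rpoly) \<and>
              0 = (\<Sum>w\<in>carrier W. N w * \<iota> (F1 w))" using A s1 unfolding F1_def by simp
  have P2: "(\<forall>w. w \<notin> carrier W \<longrightarrow> F2 w = (\<lambda>x r. 0)) \<and> (\<forall>w\<in>carrier W. F2 w \<in> rpoly) \<and>
              0 = (\<Sum>w\<in>carrier W. N w * \<iota> (F2 w))" using s2 unfolding F2_def by (simp add: rpoly.rconst)
  have "F1 = F2" using decomp[of 0] P1 P2 by blast
  then show ?thesis unfolding F1_def F2_def by (simp add: fun_eq_iff zero_fun_def) metis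
qed

lemma uniq_single:
  assumes w: "w \<in> carrier W" and a: "a \<in> rpoly" and z: "N w * \<iota> a = 0"
  shows "a = 0"
proof -
  define A where "A = (\<lambda>y. if y = w then a else 0)"
  have "(\<Sum>y\<in>carrier W. N y * \<iota> (A y)) = (\<Sum>y\<in>carrier W. if y = w then N y * \<iota> a else 0)"
    by (rule sum.cong) (simp_all add: A_def iota_zero)
  also have "\<dots> = 0" using w z fin by simp
  finally have "\<forall>y\<in>carrier W. A y = 0" using a rpoly_0 by (intro uniq0) (auto simp: A_def)
  then show ?thesis using w unfolding A_def by auto
qed

lemma uniq_two:
  assumes w: "w \<in> carrier W" and v: "v \<in> carrier W" and wv: "w \<noteq> v"
    and a: "a \<in> rpoly" and b: "b \<in> rpoly" and z: "N w * \<iota> a = N v * \<iota> b"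
  shows "a = 0"
proof -
  define A where "A = (\<lambda>y. if y = w then a else if y = v then - b else 0)"
  have "(\<Sum>y\<in>carrier W. N y * \<iota> (A y))
      = (\<Sum>y\<in>carrier W. (if y = w then N y * \<iota> a else 0) + (if y = v then - (N y * \<iota> b) else 0))"
    by (rule sum.cong) (use wv b in \<open>simp_all add: A_def iota_zero iota_uminus\<close>)
  also have "\<dots> = N w * \<iota> a - N v * \<iota> b" using w v fin by (simp add: sum.distrib)
  also have "\<dots> = 0" using z by simp
  finally have "\<forall>y\<in>carrier W. A y = 0" using a b rpoly_0 rpoly_uminus by (intro uniq0) (auto simp: A_def)
  then show ?thesis using w unfolding A_def by auto
qed

definition lower :: "'h \<Rightarrow> bool" where
  "lower E \<longleftrightarrow> (\<exists>G. (\<forall>y. G y \<in> rcpoly) \<and> E = (\<Sum>y\<in>carrier W. N y * \<iota> (G y)))"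

lemma lower_0: "lower 0"
  unfolding lower_def by (rule exI[of _ "\<lambda>y. 0"]) (simp add: rcpoly_0 iota_zero)

lemma lower_add: "lower A \<Longrightarrow> lower B \<Longrightarrow> lower (A + B)"
proof -
  assume "lower A" "lower B"
  then obtain GA GB where GA: "\<forall>y. GA y \<in> rcpoly" "A = (\<Sum>y\<in>carrier W. N y * \<iota> (GA y))"
    and GB: "\<forall>y. GB y \<in> rcpoly" "B = (\<Sum>y\<in>carrier W. N y * \<iota> (GB y))" unfolding lower_def by blast
  have "A + B = (\<Sum>y\<in>carrier W. N y * \<iota> (GA y + GB y))"
    unfolding GA(2) GB(2) sum.distrib[symmetric]
    by (rule sum.cong) (use GA GB in \<open>simp_all add: iota_add rcpoly_rpoly distrib_left\<close>)
  moreover have "\<forall>y. GA y + GB y \<in> rcpoly" using GA GB by (auto intro: rcpoly.rcadd)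
  ultimately show ?thesis unfolding lower_def by (intro exI[of _ "\<lambda>y. GA y + GB y"] conjI)
qed

lemma lower_scal: "k \<in> rcpoly \<Longrightarrow> lower A \<Longrightarrow> lower (\<iota> k * A)"
proof -
  assume k: "k \<in> rcpoly" and "lower A"
  then obtain G where G: "\<forall>y. G y \<in> rcpoly" "A = (\<Sum>y\<in>carrier W. N y * \<iota> (G y))" unfolding lower_def by blast
  have "\<iota> k * A = (\<Sum>y\<in>carrier W. N y * \<iota> (k * G y))"
    unfolding G(2) sum_distrib_left
  proof (rule sum.cong)
    fix y assume y: "y \<in> carrier W"
    have "\<iota> k * (N y * \<iota> (G y)) = N y * (\<iota> k * \<iota> (G y))"
      using rc_central[OF k, of "N y"] by (simp add: mult.assoc[symmetric])
    also have "\<dots> = N y * \<iota> (k * G y)" using k G by (simp add: iota_mult rcpoly_rpoly)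
    finally show "\<iota> k * (N y * \<iota> (G y)) = N y * \<iota> (k * G y)" .
  qed simp
  moreover have "\<forall>y. k * G y \<in> rcpoly" using k G by (auto intro: rcpoly.rcmult)
  ultimately show ?thesis unfolding lower_def by (intro exI[of _ "\<lambda>y. k * G y"] conjI)
qed

lemma lower_single: "w \<in> carrier W \<Longrightarrow> g \<in> rcpoly \<Longrightarrow> lower (N w * \<iota> g)"
proof -
  assume w: "w \<in> carrier W" and g: "g \<in> rcpoly"
  define G where "G = (\<lambda>y. if y = w then g else 0)"
  have "(\<Sum>y\<in>carrier W. N y * \<iota> (G y)) = (\<Sum>y\<in>carrier W. if y = w then N y * \<iota> g else 0)"
    by (rule sum.cong) (simp_all add: G_def iota_zero)
  also have "\<dots> = N w * \<iota> g" using w fin by simp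
  finally have "N w * \<iota> g = (\<Sum>y\<in>carrier W. N y * \<iota> (G y))" ..
  moreover have "\<forall>y. G y \<in> rcpoly" unfolding G_def using g rcpoly_0 by auto
  ultimately show ?thesis unfolding lower_def by (intro exI[of _ G] conjI)
qed

lemma const_rc: "(\<lambda>x r. a) \<in> rcpoly" by (rule rcpoly.rcconst)

lemma bij_rmult: "v \<in> carrier W \<Longrightarrow> bij_betw (\<lambda>y. y \<otimes>\<^bsub>W\<^esub> v) (carrier W) (carrier W)"
  by (rule bij_betw_byWitness[where f' = "\<lambda>u. u \<otimes>\<^bsub>W\<^esub> inv\<^bsub>W\<^esub> v"]) (auto simp: m_assoc)

lemma bij_lmult: "w \<in> carrier W \<Longrightarrow> bij_betw (\<lambda>y. w \<otimes>\<^bsub>W\<^esub> y) (carrier W) (carrier W)"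
  by (rule bij_betw_byWitness[where f' = "\<lambda>u. inv\<^bsub>W\<^esub> w \<otimes>\<^bsub>W\<^esub> u"]) (auto simp: m_assoc[symmetric])

lemma lower_rmul: "v \<in> carrier W \<Longrightarrow> lower A \<Longrightarrow> lower (A * N v)"
proof -
  assume v: "v \<in> carrier W" and "lower A"
  then obtain G where G: "\<forall>y. G y \<in> rcpoly" "A = (\<Sum>y\<in>carrier W. N y * \<iota> (G y))" unfolding lower_def by blast
  define G' where "G' = (\<lambda>u. (\<lambda>x r. cocyc (u \<otimes>\<^bsub>W\<^esub> inv\<^bsub>W\<^esub> v) v) * G (u \<otimes>\<^bsub>W\<^esub> inv\<^bsub>W\<^esub> v))"
  have "A * N v = (\<Sum>y\<in>carrier W. N y * \<iota> (G y) * N v)" unfolding G(2) by (rule sum_distrib_right)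
  also have "\<dots> = (\<Sum>y\<in>carrier W. N (y \<otimes>\<^bsub>W\<^esub> v) * \<iota> (G' (y \<otimes>\<^bsub>W\<^esub> v)))"
  proof (rule sum.cong)
    fix y assume y: "y \<in> carrier W"
    have yv: "y \<otimes>\<^bsub>W\<^esub> v \<otimes>\<^bsub>W\<^esub> inv\<^bsub>W\<^esub> v = y" using y v by (simp add: m_assoc)
    have "N y * \<iota> (G y) * N v = N y * N v * \<iota> (G y)"
      using rc_central[OF G(1)[rule_format, of y], of "N v"] by (simp add: mult.assoc)
    also have "\<dots> = \<iota> (\<lambda>x r. cocyc y v) * N (y \<otimes>\<^bsub>W\<^esub> v) * \<iota> (G y)" using y v by (simp add: N_mult)
    also have "\<dots> = N (y \<otimes>\<^bsub>W\<^esub> v) * (\<iota> (\<lambda>x r. cocyc y v) * \<iota> (G y))"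
      using iota_const_central[of "cocyc y v" "N (y \<otimes>\<^bsub>W\<^esub> v)"] by (simp add: mult.assoc)
    also have "\<dots> = N (y \<otimes>\<^bsub>W\<^esub> v) * \<iota> (G' (y \<otimes>\<^bsub>W\<^esub> v))"
      unfolding G'_def yv using G(1) by (simp add: iota_mult rcpoly_rpoly rpoly.rconst)
    finally show "N y * \<iota> (G y) * N v = N (y \<otimes>\<^bsub>W\<^esub> v) * \<iota> (G' (y \<otimes>\<^bsub>W\<^esub> v))" .
  qed simp
  also have "\<dots> = (\<Sum>u\<in>carrier W. N u * \<iota> (G' u))"
    by (rule sum.reindex_bij_betw[OF bij_rmult[OF v], of "\<lambda>u. N u * \<iota> (G' u)"])
  finally have "A * N v = (\<Sum>u\<in>carrier W. N u * \<iota> (G' u))" .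
  moreover have "\<forall>u. G' u \<in> rcpoly" unfolding G'_def using G(1) by (auto intro: rcpoly.rcmult const_rc)
  ultimately show ?thesis unfolding lower_def by (intro exI[of _ G'] conjI)
qed

lemma lower_lmul: "w \<in> carrier W \<Longrightarrow> lower A \<Longrightarrow> lower (N w * A)"
proof -
  assume w: "w \<in> carrier W" and "lower A"
  then obtain G where G: "\<forall>y. G y \<in> rcpoly" "A = (\<Sum>y\<in>carrier W. N y * \<iota> (G y))" unfolding lower_def by blast
  define G' where "G' = (\<lambda>u. (\<lambda>x r. cocyc w (inv\<^bsub>W\<^esub> w \<otimes>\<^bsub>W\<^esub> u)) * G (inv\<^bsub>W\<^esub> w \<otimes>\<^bsub>W\<^esub> u))"
  have "N w * A = (\<Sum>y\<in>carrier W. N w * (N y * \<iota> (G y)))" unfolding G(2) by (rule sum_distrib_left)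
  also have "\<dots> = (\<Sum>y\<in>carrier W. N (w \<otimes>\<^bsub>W\<^esub> y) * \<iota> (G' (w \<otimes>\<^bsub>W\<^esub> y)))"
  proof (rule sum.cong)
    fix y assume y: "y \<in> carrier W"
    have wy: "inv\<^bsub>W\<^esub> w \<otimes>\<^bsub>W\<^esub> (w \<otimes>\<^bsub>W\<^esub> y) = y" using y w by (simp add: m_assoc[symmetric])
    have "N w * (N y * \<iota> (G y)) = \<iota> (\<lambda>x r. cocyc w y) * N (w \<otimes>\<^bsub>W\<^esub> y) * \<iota> (G y)"
      using y w by (simp add: N_mult mult.assoc[symmetric])
    also have "\<dots> = N (w \<otimes>\<^bsub>W\<^esub> y) * (\<iota> (\<lambda>x r. cocyc w y) * \<iota> (G y))"
      using iota_const_central[of "cocyc w y" "N (w \<otimes>\<^bsub>W\<^esub> y)"] by (simp add: mult.assoc)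
    also have "\<dots> = N (w \<otimes>\<^bsub>W\<^esub> y) * \<iota> (G' (w \<otimes>\<^bsub>W\<^esub> y))"
      unfolding G'_def wy using G(1) by (simp add: iota_mult rcpoly_rpoly rpoly.rconst)
    finally show "N w * (N y * \<iota> (G y)) = N (w \<otimes>\<^bsub>W\<^esub> y) * \<iota> (G' (w \<otimes>\<^bsub>W\<^esub> y))" .
  qed simp
  also have "\<dots> = (\<Sum>u\<in>carrier W. N u * \<iota> (G' u))"
    by (rule sum.reindex_bij_betw[OF bij_lmult[OF w], of "\<lambda>u. N u * \<iota> (G' u)"])
  finally have "N w * A = (\<Sum>u\<in>carrier W. N u * \<iota> (G' u))" .
  moreover have "\<forall>u. G' u \<in> rcpoly" unfolding G'_def using G(1) by (auto intro: rcpoly.rcmult const_rc)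
  ultimately show ?thesis unfolding lower_def by (intro exI[of _ G'] conjI)
qed


lemma lower_diff: "lower A \<Longrightarrow> lower B \<Longrightarrow> lower (A - B)"
proof -
  assume a: "lower A" and b: "lower B"
  have "lower (\<iota> (\<lambda>x r. -1) * B)" using b by (intro lower_scal const_rc)
  moreover have "\<iota> (\<lambda>x r. -1) = - 1"
  proof -
    have "\<iota> (- 1) = - \<iota> 1" using rpoly_1 by (rule iota_uminus)
    moreover have "(- 1 :: ('n \<Rightarrow> complex) \<Rightarrow> complex \<Rightarrow> complex) = (\<lambda>x r. -1)" by (rule ext)+ simp
    ultimately show ?thesis using iota_one by simp
  qed
  ultimately have "lower (- B)" by simp
  then have "lower (A + - B)" using a by (intro lower_add)
  then show ?thesis by simp
qed

lemma Xi: "w \<in> carrier W \<Longrightarrow> \<forall>a. lower (\<iota> (\<lambda>x r. lin a x) * N w - N w * \<iota> (act (inv\<^bsub>W\<^esub> w) (\<lambda>x r. lin a x)))"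
proof (erule gen_principle[where P = "\<lambda>w. \<forall>a. lower (\<iota> (\<lambda>x r. lin a x) * N w - N w * \<iota> (act (inv\<^bsub>W\<^esub> w) (\<lambda>x r. lin a x)))", rotated 4])
  show "\<forall>a. lower (\<iota> (\<lambda>x r. lin a x) * N \<one>\<^bsub>W\<^esub> - N \<one>\<^bsub>W\<^esub> * \<iota> (act (inv\<^bsub>W\<^esub> \<one>\<^bsub>W\<^esub>) (\<lambda>x r. lin a x)))"
    by (simp add: N_one act_one lower_0)
next
  show "\<forall>i\<in>I. \<forall>a. lower (\<iota> (\<lambda>x r. lin a x) * N (s i) - N (s i) * \<iota> (act (inv\<^bsub>W\<^esub> (s i)) (\<lambda>x r. lin a x)))"
  proof (intro ballI allI)
    fix i a assume i: "i \<in> I"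
    define L where "L = (\<lambda>(x::'n \<Rightarrow> complex) (r::complex). lin a x)"
    define \<eta> where "\<eta> = act (inv\<^bsub>W\<^esub> (s i)) L"
    have S: "s i \<in> carrier W" using i by (rule s_carrier)
    have Lr: "L \<in> rpoly" unfolding L_def by (rule rpoly_lin)
    have er: "\<eta> \<in> rpoly" unfolding \<eta>_def using Lr by (rule act_rpoly)
    obtain h where h: "h \<in> rpoly" "\<forall>x r. lin (\<alpha> i) x * h x r = \<eta> x r - act (s i) \<eta> x r"
        "N (s i) * \<iota> \<eta> - \<iota> (act (s i) \<eta>) * N (s i) = \<iota> (cr i * h)"
      using cross_gen[OF i er] by blast
    have sE: "act (s i) \<eta> = L" unfolding \<eta>_def using S by (rule act_inv_cancel)
    have ex: "\<eta> x r = lin a x - lin (\<alpha> i) x * lin a (hc i)" for x r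
    proof -
      have "\<eta> x r = lin a (mv (\<rho> (s i)) x)" unfolding \<eta>_def L_def using S by (simp add: act_apply)
      also have "\<dots> = lin a x - lin (\<alpha> i) x * lin a (hc i)" using refl i by (simp add: lin_sub_smult)
      finally show ?thesis .
    qed
    define k where "k = (\<lambda>(x::'n \<Rightarrow> complex) (r::complex). lin a (hc i))"
    have kr: "k \<in> rcpoly" unfolding k_def by (rule rcpoly.rcconst)
    have "h + k = 0"
    proof (rule cancel_fun[OF i])
      show "h + k \<in> rpoly" using h(1) kr rcpoly_rpoly rpoly_add by blast
      show "\<forall>x r. lin (\<alpha> i) x * (h + k) x r = 0"
        using h(2) unfolding sE by (simp add: ex k_def L_def algebra_simps)
    qed
    then have hk: "h = - k" by (simp add: eq_neg_iff_add_eq_0)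
    have "\<iota> L * N (s i) - N (s i) * \<iota> \<eta> = - \<iota> (cr i * h)" using h(3) unfolding sE by (metis minus_diff_eq)
    also have "\<dots> = \<iota> (cr i * k)"
    proof -
      have "cr i * h = - (cr i * k)" unfolding hk by simp
      moreover have "cr i * k \<in> rpoly" using kr cr_rc rcpoly_rpoly rcpoly.rcmult by blast
      ultimately show ?thesis by (simp add: iota_uminus)
    qed
    also have "\<dots> = N \<one>\<^bsub>W\<^esub> * \<iota> (cr i * k)" by (simp add: N_one)
    finally have "\<iota> L * N (s i) - N (s i) * \<iota> \<eta> = N \<one>\<^bsub>W\<^esub> * \<iota> (cr i * k)" .
    moreover have "lower (N \<one>\<^bsub>W\<^esub> * \<iota> (cr i * k))"
      using kr cr_rc by (intro lower_single rcpoly.rcmult) auto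
    ultimately show "lower (\<iota> (\<lambda>x r. lin a x) * N (s i) - N (s i) * \<iota> (act (inv\<^bsub>W\<^esub> (s i)) (\<lambda>x r. lin a x)))"
      unfolding \<eta>_def L_def by simp
  qed
next
  show "\<forall>w\<in>R. \<forall>a. lower (\<iota> (\<lambda>x r. lin a x) * N w - N w * \<iota> (act (inv\<^bsub>W\<^esub> w) (\<lambda>x r. lin a x)))"
  proof (intro ballI allI)
    fix w a assume w: "w \<in> R"
    have wc: "w \<in> carrier W" using w by (rule R_carrier)
    have "N w * \<iota> (act (inv\<^bsub>W\<^esub> w) (\<lambda>x r. lin a x)) = \<iota> (act w (act (inv\<^bsub>W\<^esub> w) (\<lambda>x r. lin a x))) * N w"
      using w by (intro Rrel_gen act_rpoly rpoly_lin)
    also have "\<dots> = \<iota> (\<lambda>x r. lin a x) * N w" using wc by (simp only: act_inv_cancel)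
    finally show "lower (\<iota> (\<lambda>x r. lin a x) * N w - N w * \<iota> (act (inv\<^bsub>W\<^esub> w) (\<lambda>x r. lin a x)))"
      by (simp add: lower_0)
  qed
next
  show "\<forall>w\<in>carrier W. \<forall>v\<in>carrier W.
    (\<forall>a. lower (\<iota> (\<lambda>x r. lin a x) * N w - N w * \<iota> (act (inv\<^bsub>W\<^esub> w) (\<lambda>x r. lin a x)))) \<longrightarrow>
    (\<forall>a. lower (\<iota> (\<lambda>x r. lin a x) * N v - N v * \<iota> (act (inv\<^bsub>W\<^esub> v) (\<lambda>x r. lin a x)))) \<longrightarrow>
    (\<forall>a. lower (\<iota> (\<lambda>x r. lin a x) * N (w \<otimes>\<^bsub>W\<^esub> v) - N (w \<otimes>\<^bsub>W\<^esub> v) * \<iota> (act (inv\<^bsub>W\<^esub> (w \<otimes>\<^bsub>W\<^esub> v)) (\<lambda>x r. lin a x))))"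
  proof (intro ballI impI allI)
    fix w v a assume w: "w \<in> carrier W" and v: "v \<in> carrier W"
      and Pw: "\<forall>a. lower (\<iota> (\<lambda>x r. lin a x) * N w - N w * \<iota> (act (inv\<^bsub>W\<^esub> w) (\<lambda>x r. lin a x)))"
      and Pv: "\<forall>a. lower (\<iota> (\<lambda>x r. lin a x) * N v - N v * \<iota> (act (inv\<^bsub>W\<^esub> v) (\<lambda>x r. lin a x)))"
    define L where "L = (\<lambda>(x::'n \<Rightarrow> complex) (r::complex). lin a x)"
    define a' where "a' = funct_act (\<rho> (inv\<^bsub>W\<^esub> (inv\<^bsub>W\<^esub> w))) a"
    have L': "act (inv\<^bsub>W\<^esub> w) L = (\<lambda>x r. lin a' x)" unfolding L_def a'_def by (rule act_lin)
    have L'': "act (inv\<^bsub>W\<^esub> (w \<otimes>\<^bsub>W\<^esub> v)) L = act (inv\<^bsub>W\<^esub> v) (\<lambda>x r. lin a' x)"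
    proof -
      have "inv\<^bsub>W\<^esub> (w \<otimes>\<^bsub>W\<^esub> v) = inv\<^bsub>W\<^esub> v \<otimes>\<^bsub>W\<^esub> inv\<^bsub>W\<^esub> w"
        using w v by (rule inv_mult_group)
      then show ?thesis using w v by (simp only: act_mult inv_closed L')
    qed
    define E1 where "E1 = \<iota> L * N w - N w * \<iota> (\<lambda>x r. lin a' x)"
    define E2 where "E2 = \<iota> (\<lambda>x r. lin a' x) * N v - N v * \<iota> (act (inv\<^bsub>W\<^esub> v) (\<lambda>x r. lin a' x))"
    have l1: "lower E1"
    proof -
      have "lower (\<iota> L * N w - N w * \<iota> (act (inv\<^bsub>W\<^esub> w) L))" using Pw unfolding L_def by blast
      then show ?thesis unfolding E1_def L' .
    qed
    have l2: "lower E2" using Pv unfolding E2_def by blast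
    define k where "k = (\<lambda>(x::'n \<Rightarrow> complex) (r::complex). inverse (cocyc w v))"
    have kc: "\<iota> k * \<iota> L = \<iota> L * \<iota> k" unfolding k_def by (rule iota_const_central)
    have kc': "\<iota> L * (\<iota> k * Y) = \<iota> k * (\<iota> L * Y)" for Y
      by (simp add: mult.assoc[symmetric] kc)
    have "\<iota> L * N (w \<otimes>\<^bsub>W\<^esub> v) - N (w \<otimes>\<^bsub>W\<^esub> v) * \<iota> (act (inv\<^bsub>W\<^esub> v) (\<lambda>x r. lin a' x))
        = \<iota> k * (\<iota> L * N w * N v - N w * N v * \<iota> (act (inv\<^bsub>W\<^esub> v) (\<lambda>x r. lin a' x)))"
    proof -
      have A: "\<iota> k * (\<iota> L * N w * N v) = \<iota> L * (\<iota> k * (N w * N v))" by (metis kc mult.assoc)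
      have B: "\<iota> k * (N w * N v * \<iota> (act (inv\<^bsub>W\<^esub> v) (\<lambda>x r. lin a' x)))
          = \<iota> k * (N w * N v) * \<iota> (act (inv\<^bsub>W\<^esub> v) (\<lambda>x r. lin a' x))" by (simp only: mult.assoc)
      show ?thesis unfolding N_prod[OF w v] k_def[symmetric] right_diff_distrib A B ..
    qed
    also have "\<iota> L * N w * N v - N w * N v * \<iota> (act (inv\<^bsub>W\<^esub> v) (\<lambda>x r. lin a' x)) = N w * E2 + E1 * N v"
      unfolding E1_def E2_def right_diff_distrib left_diff_distrib mult.assoc by simp
    finally have "\<iota> L * N (w \<otimes>\<^bsub>W\<^esub> v) - N (w \<otimes>\<^bsub>W\<^esub> v) * \<iota> (act (inv\<^bsub>W\<^esub> (w \<otimes>\<^bsub>W\<^esub> v)) L)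
        = \<iota> k * (N w * E2 + E1 * N v)" unfolding L'' .
    moreover have "lower (\<iota> k * (N w * E2 + E1 * N v))"
      unfolding k_def using w v l1 l2 by (intro lower_scal const_rc lower_add lower_lmul lower_rmul)
    ultimately show "lower (\<iota> (\<lambda>x r. lin a x) * N (w \<otimes>\<^bsub>W\<^esub> v) - N (w \<otimes>\<^bsub>W\<^esub> v) * \<iota> (act (inv\<^bsub>W\<^esub> (w \<otimes>\<^bsub>W\<^esub> v)) (\<lambda>x r. lin a x)))"
      unfolding L_def by simp
  qed
qed


lemma expansion:
  assumes zc: "z \<in> centre" and F: "\<forall>w\<in>carrier W. F w \<in> rpoly"
    and zF: "z = (\<Sum>w\<in>carrier W. N w * \<iota> (F w))"
  shows "\<exists>G. (\<forall>w\<in>carrier W. \<forall>y. G w y \<in> rcpoly) \<and> (\<forall>y\<in>carrier W. G \<one>\<^bsub>W\<^esub> y = 0) \<and>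
     (\<forall>y\<in>carrier W. (act (inv\<^bsub>W\<^esub> y) (\<lambda>x r. lin a x) - (\<lambda>x r. lin a x)) * F y
          + (\<Sum>w\<in>carrier W. G w y * F w) = 0)"
proof -
  define L where "L = (\<lambda>(x::'n \<Rightarrow> complex) (r::complex). lin a x)"
  have Lr: "L \<in> rpoly" unfolding L_def by (rule rpoly_lin)
  define E where "E = (\<lambda>w. \<iota> L * N w - N w * \<iota> (act (inv\<^bsub>W\<^esub> w) L))"
  have "\<forall>w\<in>carrier W. \<exists>G. (\<forall>y. G y \<in> rcpoly) \<and> E w = (\<Sum>y\<in>carrier W. N y * \<iota> (G y))"
    using Xi unfolding E_def L_def lower_def by blast
  then obtain G where G: "\<forall>w\<in>carrier W. (\<forall>y. G w y \<in> rcpoly) \<and> E w = (\<Sum>y\<in>carrier W. N y * \<iota> (G w y))"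
    by metis
  have G1: "\<forall>y\<in>carrier W. G \<one>\<^bsub>W\<^esub> y = 0"
  proof (rule uniq0)
    show "\<forall>y\<in>carrier W. G \<one>\<^bsub>W\<^esub> y \<in> rpoly" using G rcpoly_rpoly by blast
    have "E \<one>\<^bsub>W\<^esub> = 0" unfolding E_def by (simp add: N_one act_one)
    then show "(\<Sum>y\<in>carrier W. N y * \<iota> (G \<one>\<^bsub>W\<^esub> y)) = 0" using G by simp
  qed
  define H where "H = (\<lambda>y. (act (inv\<^bsub>W\<^esub> y) L - L) * F y + (\<Sum>w\<in>carrier W. G w y * F w))"
  have Hr: "\<forall>y\<in>carrier W. H y \<in> rpoly"
  proof
    fix y assume y: "y \<in> carrier W"
    have "(\<Sum>w\<in>carrier W. G w y * F w) \<in> rpoly"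
      using F G fin by (intro rpoly_sum' ballI rpoly_mult) (auto intro: rcpoly_rpoly)
    moreover have "(act (inv\<^bsub>W\<^esub> y) L - L) * F y \<in> rpoly"
      using F y Lr by (intro rpoly_mult rpoly_diff act_rpoly) auto
    ultimately show "H y \<in> rpoly" unfolding H_def by (rule rpoly_add[rotated])
  qed
  have "0 = \<iota> L * z - z * \<iota> L" using zc unfolding centre_def by simp
  also have "\<dots> = (\<Sum>w\<in>carrier W. \<iota> L * N w * \<iota> (F w) - N w * \<iota> (F w) * \<iota> L)"
    unfolding zF sum_distrib_left sum_distrib_right sum_subtractf[symmetric] mult.assoc ..
  also have "\<dots> = (\<Sum>w\<in>carrier W. N w * \<iota> ((act (inv\<^bsub>W\<^esub> w) L - L) * F w)
                    + (\<Sum>y\<in>carrier W. N y * \<iota> (G w y * F w)))"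
  proof (rule sum.cong)
    fix w assume w: "w \<in> carrier W"
    have Fw: "F w \<in> rpoly" using F w by blast
    have L'r: "act (inv\<^bsub>W\<^esub> w) L \<in> rpoly" using Lr by (rule act_rpoly)
    have "\<iota> L * N w = N w * \<iota> (act (inv\<^bsub>W\<^esub> w) L) + E w" unfolding E_def by simp
    then have e1: "\<iota> L * N w * \<iota> (F w) = N w * \<iota> (act (inv\<^bsub>W\<^esub> w) L) * \<iota> (F w) + E w * \<iota> (F w)"
      by (simp only: distrib_right)
    have e2: "E w * \<iota> (F w) = (\<Sum>y\<in>carrier W. N y * \<iota> (G w y * F w))"
    proof -
      have Ew: "E w = (\<Sum>y\<in>carrier W. N y * \<iota> (G w y))" using G w by blast
      have "E w * \<iota> (F w) = (\<Sum>y\<in>carrier W. N y * \<iota> (G w y) * \<iota> (F w))"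
        unfolding Ew by (rule sum_distrib_right)
      also have "\<dots> = (\<Sum>y\<in>carrier W. N y * \<iota> (G w y * F w))"
      proof (rule sum.cong[OF HOL.refl])
        fix y assume y: "y \<in> carrier W"
        have g: "G w y \<in> rpoly" using G w rcpoly_rpoly by blast
        show "N y * \<iota> (G w y) * \<iota> (F w) = N y * \<iota> (G w y * F w)"
          by (simp add: iota_mult[OF g Fw] mult.assoc)
      qed
      finally show ?thesis .
    qed
    have e3: "N w * \<iota> (act (inv\<^bsub>W\<^esub> w) L) * \<iota> (F w) - N w * \<iota> (F w) * \<iota> L
        = N w * \<iota> ((act (inv\<^bsub>W\<^esub> w) L - L) * F w)"
    proof -
      have "\<iota> ((act (inv\<^bsub>W\<^esub> w) L - L) * F w) = \<iota> (act (inv\<^bsub>W\<^esub> w) L * F w - L * F w)"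
        by (simp only: left_diff_distrib)
      also have "\<dots> = \<iota> (act (inv\<^bsub>W\<^esub> w) L * F w) - \<iota> (L * F w)"
        using L'r Fw Lr by (intro iota_diff rpoly_mult)
      also have "\<dots> = \<iota> (act (inv\<^bsub>W\<^esub> w) L) * \<iota> (F w) - \<iota> (F w) * \<iota> L"
        by (simp only: iota_mult[OF L'r Fw] iota_mult[OF Lr Fw] iota_comm[OF Lr Fw])
      finally show ?thesis by (simp only: right_diff_distrib mult.assoc)
    qed
    show "\<iota> L * N w * \<iota> (F w) - N w * \<iota> (F w) * \<iota> L
        = N w * \<iota> ((act (inv\<^bsub>W\<^esub> w) L - L) * F w) + (\<Sum>y\<in>carrier W. N y * \<iota> (G w y * F w))"
      unfolding e1 diff_add_eq[symmetric] e3 e2 ..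
  qed simp
  also have "\<dots> = (\<Sum>y\<in>carrier W. N y * \<iota> ((act (inv\<^bsub>W\<^esub> y) L - L) * F y))
                  + (\<Sum>y\<in>carrier W. N y * (\<Sum>w\<in>carrier W. \<iota> (G w y * F w)))"
    unfolding sum.distrib sum_distrib_left by (rule arg_cong[where f = "\<lambda>u. _ + u"], rule sum.swap)
  also have "\<dots> = (\<Sum>y\<in>carrier W. N y * \<iota> (H y))"
    unfolding sum.distrib[symmetric]
  proof (rule sum.cong)
    fix y assume y: "y \<in> carrier W"
    have s1: "(\<Sum>w\<in>carrier W. \<iota> (G w y * F w)) = \<iota> (\<Sum>w\<in>carrier W. G w y * F w)"
      using F G fin by (intro iota_sum[symmetric] ballI rpoly_mult) (auto intro: rcpoly_rpoly)
    have a1: "(act (inv\<^bsub>W\<^esub> y) L - L) * F y \<in> rpoly"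
      using F y Lr by (intro rpoly_mult rpoly_diff act_rpoly) auto
    have a2: "(\<Sum>w\<in>carrier W. G w y * F w) \<in> rpoly"
      using F G fin by (intro rpoly_sum' ballI rpoly_mult) (auto intro: rcpoly_rpoly)
    show "N y * \<iota> ((act (inv\<^bsub>W\<^esub> y) L - L) * F y) + N y * (\<Sum>w\<in>carrier W. \<iota> (G w y * F w))
        = N y * \<iota> (H y)"
      unfolding s1 H_def iota_add[OF a1 a2] by (simp add: distrib_left)
  qed simp
  finally have "\<forall>y\<in>carrier W. H y = 0" using Hr by (intro uniq0) auto
  moreover have "\<forall>w\<in>carrier W. \<forall>y. G w y \<in> rcpoly" using G by blast
  ultimately show ?thesis using G1 unfolding H_def L_def by (intro exI[of _ G] conjI) blast+
qed


lemma s_ne_one: "i \<in> I \<Longrightarrow> s i \<noteq> \<one>\<^bsub>W\<^esub>"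
proof
  assume i: "i \<in> I" and e: "s i = \<one>\<^bsub>W\<^esub>"
  have "mv (\<rho> (s i)) (hc i) = hc i" unfolding e rep_one mv_idm ..
  moreover have "mv (\<rho> (s i)) (hc i) = (\<lambda>j. hc i j - 2 * hc i j)" using refl coroot i by simp
  ultimately have "hc i = (\<lambda>j. 0)" by (simp add: fun_eq_iff)
  then have "lin (\<alpha> i) (hc i) = 0" by (simp add: lin_zero)
  then show False using coroot i by simp
qed

lemma vanish_good:
  assumes F: "\<forall>w\<in>carrier W. F w \<in> rpoly"
    and HH: "\<forall>a. \<exists>G. (\<forall>w\<in>carrier W. \<forall>y. G w y \<in> rcpoly) \<and> (\<forall>y\<in>carrier W. G \<one>\<^bsub>W\<^esub> y = 0) \<and>
     (\<forall>y\<in>carrier W. (act (inv\<^bsub>W\<^esub> y) (\<lambda>x r. lin a x) - (\<lambda>x r. lin a x)) * F y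
          + (\<Sum>w\<in>carrier W. G w y * F w) = 0)"
    and x0: "\<forall>y\<in>carrier W. y \<noteq> \<one>\<^bsub>W\<^esub> \<longrightarrow> mv (\<rho> y) x0 \<noteq> x0"
    and y: "y \<in> carrier W" "y \<noteq> \<one>\<^bsub>W\<^esub>"
  shows "F y x0 r0 = 0"
proof -
  have "\<forall>w\<in>carrier W. \<exists>p. \<forall>t. F w (line (\<lambda>j. 0) x0 t) r0 = poly p t"
    using F rpoly_line by blast
  then obtain p where p: "\<forall>w\<in>carrier W. \<forall>t. F w (line (\<lambda>j. 0) x0 t) r0 = poly (p w) t" by metis
  have allz: "\<forall>w\<in>carrier W - {\<one>\<^bsub>W\<^esub>}. p w = 0"
  proof (rule ccontr)
    assume nz: "\<not> (\<forall>w\<in>carrier W - {\<one>\<^bsub>W\<^esub>}. p w = 0)"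
    define S where "S = {w \<in> carrier W - {\<one>\<^bsub>W\<^esub>}. p w \<noteq> 0}"
    have Sne: "S \<noteq> {}" unfolding S_def using nz by blast
    have Sfin: "finite S" unfolding S_def using fin by simp
    define m where "m = Max (degree ` p ` S)"
    have "m \<in> degree ` p ` S" unfolding m_def using Sne Sfin by (intro Max_in) auto
    then obtain y0 where y0: "y0 \<in> S" "degree (p y0) = m" by auto
    have mmax: "\<forall>w\<in>S. degree (p w) \<le> m" unfolding m_def using Sfin by auto
    have y0c: "y0 \<in> carrier W" "y0 \<noteq> \<one>\<^bsub>W\<^esub>" "p y0 \<noteq> 0" using y0 unfolding S_def by auto
    then have "mv (\<rho> y0) x0 \<noteq> x0" using x0 by blast
    then obtain j where j: "mv (\<rho> y0) x0 j \<noteq> x0 j" by auto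
    define a where "a = (\<lambda>k. if k = j then (1::complex) else 0)"
    obtain G where G: "\<forall>w\<in>carrier W. \<forall>y. G w y \<in> rcpoly" "\<forall>y\<in>carrier W. G \<one>\<^bsub>W\<^esub> y = 0"
      "\<forall>y\<in>carrier W. (act (inv\<^bsub>W\<^esub> y) (\<lambda>x r. lin a x) - (\<lambda>x r. lin a x)) * F y
          + (\<Sum>w\<in>carrier W. G w y * F w) = 0" using HH by blast
    define d where "d = mv (\<rho> y0) x0 j - x0 j"
    have d: "d \<noteq> 0" using j unfolding d_def by simp
    define k where "k = (\<lambda>w. G w y0 (\<lambda>j. 0) r0)"
    define Q where "Q = [:0, d:] * p y0 + (\<Sum>w\<in>carrier W. Polynomial.smult (k w) (p w))"
    have "poly Q t = 0" for t
    proof -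
      define xt where "xt = line (\<lambda>j. 0) x0 t"
      have ev: "((act (inv\<^bsub>W\<^esub> y0) (\<lambda>x r. lin a x) - (\<lambda>x r. lin a x)) * F y0
          + (\<Sum>w\<in>carrier W. G w y0 * F w)) xt r0 = 0"
        using G(3) y0c by simp
      have a1: "act (inv\<^bsub>W\<^esub> y0) (\<lambda>x r. lin a x) xt r0 = t * mv (\<rho> y0) x0 j"
      proof -
        have m: "mv (\<rho> y0) xt = line (\<lambda>j. 0) (mv (\<rho> y0) x0) t" unfolding xt_def mv_line mv_zero ..
        show ?thesis using y0c by (simp add: act_apply m lin_unit a_def line_def)
      qed
      have a2: "lin a xt = t * x0 j" unfolding xt_def by (simp add: lin_unit a_def line_def)
      have a3: "G w y0 xt r0 = k w" if "w \<in> carrier W" for w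
        unfolding k_def using rcpoly_indep[of "G w y0" xt r0 "\<lambda>j. 0"] G(1) that by blast
      have a4: "F w xt r0 = poly (p w) t" if "w \<in> carrier W" for w unfolding xt_def using p that by blast
      have "0 = (t * mv (\<rho> y0) x0 j - t * x0 j) * poly (p y0) t + (\<Sum>w\<in>carrier W. k w * poly (p w) t)"
        using ev y0c by (simp add: sum_fun_apply2 a1 a2 a3 a4 cong: sum.cong)
      also have "\<dots> = poly Q t" unfolding Q_def d_def by (simp add: poly_sum algebra_simps)
      finally show ?thesis by simp
    qed
    then have Q0: "Q = 0" using poly_all_0_iff_0 by blast
    have dA: "degree ([:0, d:] * p y0) = m + 1"
      using d y0c y0(2) by (subst degree_mult_eq) auto
    have dB: "degree (\<Sum>w\<in>carrier W. Polynomial.smult (k w) (p w)) \<le> m"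
    proof (rule degree_sum_le[OF fin])
      fix w assume w: "w \<in> carrier W"
      show "degree (Polynomial.smult (k w) (p w)) \<le> m"
      proof (cases "w = \<one>\<^bsub>W\<^esub> \<or> p w = 0")
        case True
        moreover have "k \<one>\<^bsub>W\<^esub> = 0" unfolding k_def using G(2) y0c by simp
        ultimately show ?thesis by auto
      next
        case False
        then have "w \<in> S" unfolding S_def using w by auto
        then show ?thesis using mmax degree_smult_le order_trans by blast
      qed
    qed
    have "degree Q = m + 1" unfolding Q_def using dA dB by (subst degree_add_eq_left) auto
    then show False using Q0 by simp
  qed
  then have "p y = 0" using y by blast
  then have "F y (line (\<lambda>j. 0) x0 1) r0 = 0" using p y by simp
  moreover have "line (\<lambda>j. 0) x0 1 = x0" by (simp add: line_def)
  ultimately show ?thesis by simp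
qed


lemma central_invariant:
  assumes fr: "f \<in> rpoly" and fc: "\<iota> f \<in> centre"
  shows "f \<in> inv_rpoly W \<rho>"
proof -
  have cen: "\<iota> f * h = h * \<iota> f" for h using fc unfolding centre_def by blast
  have "act w f = f" if w: "w \<in> carrier W" for w
  proof (rule gen_principle[where P = "\<lambda>w. act w f = f", OF _ _ _ _ w])
    show "act \<one>\<^bsub>W\<^esub> f = f" by (rule act_one)
  next
    show "\<forall>i\<in>I. act (s i) f = f"
    proof
      fix i assume i: "i \<in> I"
      have S: "s i \<in> carrier W" using i by (rule s_carrier)
      obtain h1 where h1: "h1 \<in> rpoly" "N (s i) * \<iota> f - \<iota> (act (s i) f) * N (s i) = \<iota> (cr i * h1)"
        using cross_gen[OF i fr] by blast
      define G where "G = f - act (s i) f"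
      have Gr: "G \<in> rpoly" unfolding G_def using fr by (intro rpoly_diff act_rpoly)
      have sGr: "act (s i) G \<in> rpoly" using Gr by (rule act_rpoly)
      have e1: "\<iota> G * N (s i) = \<iota> (cr i * h1)"
        unfolding G_def iota_diff[OF fr act_rpoly[OF fr]] left_diff_distrib using h1(2) cen by simp
      obtain h2 where h2: "h2 \<in> rpoly" "N (s i) * \<iota> (act (s i) G) - \<iota> (act (s i) (act (s i) G)) * N (s i) = \<iota> (cr i * h2)"
        using cross_gen[OF i sGr] by blast
      have c1: "cr i * h1 \<in> rpoly" "cr i * h2 \<in> rpoly" using h1(1) h2(1) cr_rpoly rpoly_mult by blast+
      have "N (s i) * \<iota> (act (s i) G) = \<iota> (cr i * h1) + \<iota> (cr i * h2)"
        using h2(2) unfolding act_s_invol[OF i] e1[symmetric] by (simp add: algebra_simps)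
      also have "\<dots> = N \<one>\<^bsub>W\<^esub> * \<iota> (cr i * h1 + cr i * h2)" using c1 by (simp add: iota_add N_one)
      finally have "act (s i) G = 0"
        using S s_ne_one[OF i] sGr c1 by (intro uniq_two[of "s i" "\<one>\<^bsub>W\<^esub>" _ "cr i * h1 + cr i * h2"] rpoly_add) auto
      then have "G = 0" using act_s_invol[OF i, of G] act_zero by metis
      then show "act (s i) f = f" unfolding G_def by simp
    qed
  next
    show "\<forall>w\<in>R. act w f = f"
    proof
      fix w assume w: "w \<in> R"
      have wc: "w \<in> carrier W" using w by (rule R_carrier)
      define G where "G = act w f - f"
      have Gr: "G \<in> rpoly" unfolding G_def using fr by (intro rpoly_diff act_rpoly)
      have iGr: "act (inv\<^bsub>W\<^esub> w) G \<in> rpoly" using Gr by (rule act_rpoly)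
      have e1: "\<iota> G * N w = 0"
        unfolding G_def iota_diff[OF act_rpoly[OF fr] fr] left_diff_distrib
        using Rrel_gen[OF w fr] cen by simp
      have "N w * \<iota> (act (inv\<^bsub>W\<^esub> w) G) = \<iota> (act w (act (inv\<^bsub>W\<^esub> w) G)) * N w"
        using w iGr by (rule Rrel_gen)
      also have "\<dots> = 0" unfolding act_inv_cancel[OF wc] e1 ..
      finally have "act (inv\<^bsub>W\<^esub> w) G = 0" using wc iGr by (intro uniq_single)
      then have "G = 0" using act_inv_cancel[OF wc, of G] act_zero by metis
      then show "act w f = f" unfolding G_def by simp
    qed
  next
    show "\<forall>w\<in>carrier W. \<forall>v\<in>carrier W. act w f = f \<longrightarrow> act v f = f \<longrightarrow> act (w \<otimes>\<^bsub>W\<^esub> v) f = f"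
      by (simp add: act_mult)
  qed
  then show ?thesis unfolding inv_rpoly_def act_def using fr by blast
qed

lemma part2:
  assumes inj: "inj_on \<rho> (carrier W)" and z: "z \<in> centre"
  shows "z \<in> \<iota> ` inv_rpoly W \<rho>"
proof -
  obtain F where F: "\<forall>w. w \<notin> carrier W \<longrightarrow> F w = (\<lambda>x r. 0)" "\<forall>w\<in>carrier W. F w \<in> rpoly"
      "z = (\<Sum>w\<in>carrier W. N w * \<iota> (F w))" using decomp[of z] by blast
  have HH: "\<forall>a. \<exists>G. (\<forall>w\<in>carrier W. \<forall>y. G w y \<in> rcpoly) \<and> (\<forall>y\<in>carrier W. G \<one>\<^bsub>W\<^esub> y = 0) \<and>
     (\<forall>y\<in>carrier W. (act (inv\<^bsub>W\<^esub> y) (\<lambda>x r. lin a x) - (\<lambda>x r. lin a x)) * F y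
          + (\<Sum>w\<in>carrier W. G w y * F w) = 0)"
    using expansion[OF z F(2,3)] by blast
  have nid: "\<exists>x. mv (\<rho> w) x \<noteq> x" if w: "w \<in> carrier W" "w \<noteq> \<one>\<^bsub>W\<^esub>" for w
  proof (rule ccontr)
    assume "\<nexists>x. mv (\<rho> w) x \<noteq> x"
    then have "\<rho> w = idm" using mv_id_imp by blast
    then have "\<rho> w = \<rho> \<one>\<^bsub>W\<^esub>" using rep_one by simp
    then show False using inj w unfolding inj_on_def by auto
  qed
  then have "\<forall>w\<in>carrier W - {\<one>\<^bsub>W\<^esub>}. \<exists>j x. mv (\<rho> w) x j \<noteq> x j" by (metis DiffE singletonI fun_eq_iff)
  then obtain J where J: "\<forall>w\<in>carrier W - {\<one>\<^bsub>W\<^esub>}. \<exists>x. mv (\<rho> w) x (J w) \<noteq> x (J w)" by metis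
  have van: "F y x1 r0 = 0" if y: "y \<in> carrier W" "y \<noteq> \<one>\<^bsub>W\<^esub>" for y x1 r0
  proof (rule ccontr)
    assume nz: "F y x1 r0 \<noteq> 0"
    define S where "S = insert (\<lambda>x. F y x r0) ((\<lambda>w x. mv (\<rho> w) x (J w) - x (J w)) ` (carrier W - {\<one>\<^bsub>W\<^esub>}))"
    have "\<exists>x. \<forall>g\<in>S. g x \<noteq> 0"
    proof (rule nonvanish)
      show "finite S" unfolding S_def using fin by simp
      show "\<forall>g\<in>S. (\<forall>x v. \<exists>p. \<forall>t. g (line x v t) = poly p t) \<and> (\<exists>y. g y \<noteq> 0)"
      proof
        fix g assume "g \<in> S"
        then consider "g = (\<lambda>x. F y x r0)" | w where "w \<in> carrier W - {\<one>\<^bsub>W\<^esub>}" "g = (\<lambda>x. mv (\<rho> w) x (J w) - x (J w))"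
          unfolding S_def by blast
        then show "(\<forall>x v. \<exists>p. \<forall>t. g (line x v t) = poly p t) \<and> (\<exists>y. g y \<noteq> 0)"
        proof cases
          case 1
          have "F y \<in> rpoly" using F(2) y by blast
          then show ?thesis using 1 nz lp_rpoly by blast
        next
          case (2 w)
          then show ?thesis using lp_mv[of "\<rho> w" "J w"] J by auto
        qed
      qed
    qed
    then obtain x0 where x0: "\<forall>g\<in>S. g x0 \<noteq> 0" by blast
    have good: "\<forall>w\<in>carrier W. w \<noteq> \<one>\<^bsub>W\<^esub> \<longrightarrow> mv (\<rho> w) x0 \<noteq> x0"
    proof (intro ballI impI notI)
      fix w assume "w \<in> carrier W" "w \<noteq> \<one>\<^bsub>W\<^esub>" "mv (\<rho> w) x0 = x0"
      then have "(\<lambda>x. mv (\<rho> w) x (J w) - x (J w)) \<in> S" unfolding S_def by blast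
      then show False using x0 \<open>mv (\<rho> w) x0 = x0\<close> by force
    qed
    have "F y x0 r0 = 0" using vanish_good[OF F(2) HH good y] .
    moreover have "(\<lambda>x. F y x r0) \<in> S" unfolding S_def by blast
    ultimately show False using x0 by force
  qed
  define f where "f = F \<one>\<^bsub>W\<^esub>"
  have fr: "f \<in> rpoly" unfolding f_def using F(2) by simp
  have "z = N \<one>\<^bsub>W\<^esub> * \<iota> f + (\<Sum>w\<in>carrier W - {\<one>\<^bsub>W\<^esub>}. N w * \<iota> (F w))"
    unfolding F(3) f_def by (rule sum.remove[OF fin one_closed])
  also have "(\<Sum>w\<in>carrier W - {\<one>\<^bsub>W\<^esub>}. N w * \<iota> (F w)) = 0"
  proof (rule sum.neutral, rule ballI)
    fix w assume w: "w \<in> carrier W - {\<one>\<^bsub>W\<^esub>}"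
    then have "F w = (\<lambda>x r. 0)" using van by (simp add: fun_eq_iff)
    then show "N w * \<iota> (F w) = 0" by simp
  qed
  finally have zf: "z = \<iota> f" by (simp add: N_one)
  have "f \<in> inv_rpoly W \<rho>" using fr z unfolding zf by (rule central_invariant)
  then show ?thesis unfolding zf by blast
qed

end

theorem main_thm:
  assumes "hk W \<rho> W0 R I \<alpha> hc s c cocyc \<iota> N"
  shows "(\<forall>f\<in>inv_rpoly W \<rho>. \<iota> f \<in> centre)
         \<and> (inj_on \<rho> (carrier W) \<longrightarrow> centre = \<iota> ` inv_rpoly W \<rho>)"
proof -
  interpret hk W \<rho> W0 R I \<alpha> hc s c cocyc \<iota> N by (rule assms)
  show ?thesis using part1 part2 by blast
qed


theorem lemma1p6:
  fixes W :: "'w monoid"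
    and \<rho> :: "'w \<Rightarrow> 'n::finite \<Rightarrow> 'n \<Rightarrow> complex"
    and W0 R :: "'w set"
    and I :: "'i set"
    and \<alpha> :: "'i \<Rightarrow> 'n \<Rightarrow> complex"
    and hc :: "'i \<Rightarrow> 'n \<Rightarrow> complex"
    and s :: "'i \<Rightarrow> 'w"
    and c :: "'i \<Rightarrow> complex"
    and cocyc :: "'w \<Rightarrow> 'w \<Rightarrow> complex"
    and \<iota> :: "(('n \<Rightarrow> complex) \<Rightarrow> complex \<Rightarrow> complex) \<Rightarrow> 'h::ring_1"
    and N :: "'w \<Rightarrow> 'h"
  assumes grp: "group W" and fin: "finite (carrier W)"
    \<comment> \<open>\<rho> : W \<rightarrow> GL(t) a representation\<close>
    and rep_hom: "\<forall>w\<in>carrier W. \<forall>v\<in>carrier W. \<rho> (w \<otimes>\<^bsub>W\<^esub> v) = mmul (\<rho> w) (\<rho> v)"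
    and rep_one: "\<rho> \<one>\<^bsub>W\<^esub> = idm"
    \<comment> \<open>W = W^\<circ> \<rtimes> R\<close>
    and W0_normal: "W0 \<lhd> W" and R_sub: "subgroup R W"
    and W0_R_int: "W0 \<inter> R = {\<one>\<^bsub>W\<^esub>}" and W0_R_prod: "W0 <#>\<^bsub>W\<^esub> R = carrier W"
    \<comment> \<open>simple roots and simple reflections generating W^\<circ>\<close>
    and finI: "finite I"
    and s_in: "\<forall>i\<in>I. s i \<in> W0"
    and W0_gen: "W0 = generate W (s ` I)"
    and alpha_nz: "\<forall>i\<in>I. \<alpha> i \<noteq> (\<lambda>j. 0)"
    and coroot: "\<forall>i\<in>I. lin (\<alpha> i) (hc i) = 2"
    and refl: "\<forall>i\<in>I. \<forall>x. mv (\<rho> (s i)) x = (\<lambda>j. x j - lin (\<alpha> i) x * hc i j)"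
    \<comment> \<open>R stabilises the set of simple roots (R = stabiliser of P)\<close>
    and R_perm: "\<forall>r\<in>R. \<forall>i\<in>I. \<exists>k\<in>I. funct_act (\<rho> (inv\<^bsub>W\<^esub> r)) (\<alpha> i) = \<alpha> k
                                 \<and> s k = r \<otimes>\<^bsub>W\<^esub> s i \<otimes>\<^bsub>W\<^esub> inv\<^bsub>W\<^esub> r"
    \<comment> \<open>parameters constant on W-conjugacy classes of simple reflections\<close>
    and c_conj: "\<forall>i\<in>I. \<forall>k\<in>I. (\<exists>w\<in>carrier W. s k = w \<otimes>\<^bsub>W\<^esub> s i \<otimes>\<^bsub>W\<^esub> inv\<^bsub>W\<^esub> w) \<longrightarrow> c i = c k"
    \<comment> \<open>\<natural>: a normalised C^\<times>-valued 2-cocycle on W/W^\<circ>, inflated to W\<close>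
    and nat_nz: "\<forall>w\<in>carrier W. \<forall>v\<in>carrier W. cocyc w v \<noteq> 0"
    and nat_cocycle: "\<forall>u\<in>carrier W. \<forall>v\<in>carrier W. \<forall>w\<in>carrier W.
                        cocyc u v * cocyc (u \<otimes>\<^bsub>W\<^esub> v) w = cocyc v w * cocyc u (v \<otimes>\<^bsub>W\<^esub> w)"
    and nat_norm: "cocyc \<one>\<^bsub>W\<^esub> \<one>\<^bsub>W\<^esub> = 1"
    and nat_cosets: "\<forall>u\<in>carrier W. \<forall>v\<in>carrier W. \<forall>a\<in>W0. \<forall>b\<in>W0.
                        cocyc (u \<otimes>\<^bsub>W\<^esub> a) (v \<otimes>\<^bsub>W\<^esub> b) = cocyc u v"
    \<comment> \<open>H is the graded Hecke algebra H(t, W, c r, \<natural>)\<close>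
    and H: "is_graded_hecke W \<rho> R I \<alpha> s c cocyc \<iota> N"
  shows "(\<forall>f\<in>inv_rpoly W \<rho>. \<iota> f \<in> centre)
         \<and> (inj_on \<rho> (carrier W) \<longrightarrow> centre = \<iota> ` inv_rpoly W \<rho>)"
proof -
  have "hk W \<rho> W0 R I \<alpha> hc s c cocyc \<iota> N"
    unfolding hk_def hk_axioms_def
    using grp fin rep_hom rep_one W0_normal R_sub W0_R_prod s_in W0_gen alpha_nz coroot refl nat_nz H
    by blast
  then show ?thesis by (rule main_thm)
qed

end
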